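(* Let $R\ge2$ and let $\mu$ be the hook partition of $2^{R-1}$ with $H(\mu)=\{2^{R-1},b,b-1,\dots,1\}$, where $0\le b\le2^{R-1}-1$ ($b=0$ meaning $H(\mu)=\{2^{R-1}\}$). Then \[ S_{P_1(\mu)}(\mu)=\begin{cases}1,&b\text{ even},\\2,&b\text{ odd}.\end{cases} \]
   Context: $f^\lambda$ is the number of standard Young tableaux of shape $\lambda$; $\mathrm{Od}(N)=\pm1$ according as the odd part of $N\ge1$ is $\equiv1$ or $\equiv3\pmod4$. For $\lambda=(\lambda_1\ge\dots\ge\lambda_k>0)$, $H(\lambda):=\{\lambda_i+k-i\}$. $P_1(\mu)$ is the set of partitions $\lambda$ with $H(\lambda)=(H(\mu)\cup\{x+2^R\})\setminus\{x\}$ for some $x\in H(\mu)$ (Type I $2^R$-parents). For a finite set $L$ of partitions, $S_L(\mu):=\frac{1}{\mathrm{Od}(f^\mu)}\sum_{\lambda\in L}\mathrm{Od}(f^\lambda)$. *)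

theory Defs
  imports Complex_Main "HOL-Library.FuncSet" "HOL-Computational_Algebra.Primes"
begin

definition is_partition :: "nat list \<Rightarrow> bool" where
  "is_partition lam \<longleftrightarrow> sorted_wrt (\<ge>) lam \<and> (\<forall>x\<in>set lam. 0 < x)"

definition cells :: "nat list \<Rightarrow> (nat \<times> nat) set" where
  "cells lam = {(i, j). i < length lam \<and> j < lam ! i}"

definition SYT :: "nat list \<Rightarrow> ((nat \<times> nat) \<Rightarrow> nat) set" where
  "SYT lam = {T \<in> cells lam \<rightarrow>\<^sub>E {1..sum_list lam}.
      bij_betw T (cells lam) {1..sum_list lam} \<and>
      (\<forall>i j. (i, j + 1) \<in> cells lam \<longrightarrow> T (i, j) < T (i, j + 1)) \<and>
      (\<forall>i j. (i + 1, j) \<in> cells lam \<longrightarrow> T (i, j) < T (i + 1, j))}"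

definition f_syt :: "nat list \<Rightarrow> nat" where
  "f_syt lam = card (SYT lam)"

definition odd_part :: "nat \<Rightarrow> nat" where
  "odd_part N = N div 2 ^ multiplicity (2::nat) N"

definition Od :: "nat \<Rightarrow> int" where
  "Od N = (if odd_part N mod 4 = 1 then 1 else -1)"

text \<open>H(lambda) = {lambda_i + k - i}, 1-indexed i; here 0-indexed.\<close>
definition H :: "nat list \<Rightarrow> nat set" where
  "H lam = {lam ! i + length lam - 1 - i | i. i < length lam}"

definition P1 :: "nat \<Rightarrow> nat list \<Rightarrow> nat list set" where
  "P1 R mu = {lam. is_partition lam \<and>
      (\<exists>x\<in>H mu. H lam = (H mu \<union> {x + 2 ^ R}) - {x})}"

definition S :: "nat list set \<Rightarrow> nat list \<Rightarrow> real" where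
  "S L mu = (\<Sum>lam\<in>L. real_of_int (Od (f_syt lam))) / real_of_int (Od (f_syt mu))"

end

theory Submission
  imports Defs
begin


definition syt :: "(nat \<times> nat) set \<Rightarrow> ((nat \<times> nat) \<Rightarrow> nat) set" where
  "syt D = {T \<in> D \<rightarrow>\<^sub>E {1..card D}. bij_betw T D {1..card D} \<and>
      (\<forall>i j. (i, j + 1) \<in> D \<longrightarrow> T (i, j) < T (i, j + 1)) \<and>
      (\<forall>i j. (i + 1, j) \<in> D \<longrightarrow> T (i, j) < T (i + 1, j))}"

definition ideal :: "(nat \<times> nat) set \<Rightarrow> bool" where
  "ideal D \<longleftrightarrow> (\<forall>i j. ((i, j + 1) \<in> D \<longrightarrow> (i, j) \<in> D) \<and> ((i + 1, j) \<in> D \<longrightarrow> (i, j) \<in> D))"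

definition Maxc :: "(nat \<times> nat) set \<Rightarrow> (nat \<times> nat) set" where
  "Maxc D = {c \<in> D. (fst c, snd c + 1) \<notin> D \<and> (fst c + 1, snd c) \<notin> D}"

lemma syt_empty: "card (syt {}) = 1"
proof -
  have "syt {} = {\<lambda>_. undefined}"
    unfolding syt_def by (auto simp: PiE_def extensional_def bij_betw_def)
  thus ?thesis by simp
qed

lemma finite_syt: "finite D \<Longrightarrow> finite (syt D)"
proof -
  assume "finite D"
  have "syt D \<subseteq> D \<rightarrow>\<^sub>E {1..card D}" unfolding syt_def by blast
  thus ?thesis using \<open>finite D\<close> by (rule finite_subset[OF _ finite_PiE]) auto
qed

lemma syt_ext: "T \<in> syt D \<Longrightarrow> T \<in> extensional D"
  unfolding syt_def PiE_def by blast
lemma syt_bij: "T \<in> syt D \<Longrightarrow> bij_betw T D {1..card D}"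
  unfolding syt_def by blast
lemma syt_row: "T \<in> syt D \<Longrightarrow> (i, j + 1) \<in> D \<Longrightarrow> T (i, j) < T (i, j + 1)"
  unfolding syt_def by blast
lemma syt_col: "T \<in> syt D \<Longrightarrow> (i + 1, j) \<in> D \<Longrightarrow> T (i, j) < T (i + 1, j)"
  unfolding syt_def by blast

lemma ideal_row: "ideal D \<Longrightarrow> (i, j + 1) \<in> D \<Longrightarrow> (i, j) \<in> D"
  unfolding ideal_def by blast
lemma ideal_col: "ideal D \<Longrightarrow> (i + 1, j) \<in> D \<Longrightarrow> (i, j) \<in> D"
  unfolding ideal_def by blast

lemma ideal_remove: "ideal D \<Longrightarrow> c \<in> Maxc D \<Longrightarrow> ideal (D - {c})"
proof -
  assume id: "ideal D" and c: "c \<in> Maxc D"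
  show ?thesis unfolding ideal_def
  proof (intro allI conjI impI)
    fix i j
    assume "(i, j + 1) \<in> D - {c}"
    thus "(i, j) \<in> D - {c}" using ideal_row[OF id, of i j] c by (auto simp: Maxc_def)
  next
    fix i j
    assume "(i + 1, j) \<in> D - {c}"
    thus "(i, j) \<in> D - {c}" using ideal_col[OF id, of i j] c by (auto simp: Maxc_def)
  qed
qed

lemma card_fix:
  assumes fin: "finite D" and id: "ideal D" and c: "c \<in> Maxc D"
  shows "card {T \<in> syt D. T c = card D} = card (syt (D - {c}))"
proof -
  let ?n = "card D"
  have cD: "c \<in> D" using c by (simp add: Maxc_def)
  have cardD': "card (D - {c}) = ?n - 1" using cD fin by simp
  have "?n > 0" using cD fin by (auto simp: card_gt_0_iff)
  hence npos: "?n \<ge> 1" by simp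
  obtain ci cj where cc: "c = (ci, cj)" by (cases c)
  have mx1: "(ci, cj + 1) \<notin> D" and mx2: "(ci + 1, cj) \<notin> D" using c cc by (auto simp: Maxc_def)
  show ?thesis
  proof (rule bij_betw_same_card[of "\<lambda>T. restrict T (D - {c})"], rule bij_betw_byWitness[where f' = "\<lambda>T. T(c := ?n)"])
    show "\<forall>T\<in>{T \<in> syt D. T c = ?n}. (restrict T (D - {c}))(c := ?n) = T"
    proof
      fix T assume T: "T \<in> {T \<in> syt D. T c = ?n}"
      hence Text: "T \<in> extensional D" by (simp add: syt_ext)
      show "(restrict T (D - {c}))(c := ?n) = T"
      proof (rule ext)
        fix x show "((restrict T (D - {c}))(c := ?n)) x = T x"
        proof (cases "x = c")
          case True thus ?thesis using T by simp
        next
          case False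
          show ?thesis
          proof (cases "x \<in> D")
            case True thus ?thesis using False by simp
          next
            case nD: False thus ?thesis using False extensional_arb[OF Text nD] by simp
          qed
        qed
      qed
    qed
    show "\<forall>T\<in>syt (D - {c}). restrict (T(c := ?n)) (D - {c}) = T"
    proof
      fix T assume T: "T \<in> syt (D - {c})"
      hence Text: "T \<in> extensional (D - {c})" by (simp add: syt_ext)
      show "restrict (T(c := ?n)) (D - {c}) = T"
      proof (rule ext)
        fix x show "restrict (T(c := ?n)) (D - {c}) x = T x"
        proof (cases "x \<in> D - {c}")
          case True thus ?thesis by simp
        next
          case nD: False thus ?thesis using extensional_arb[OF Text nD] by simp
        qed
      qed
    qed
    show "(\<lambda>T. restrict T (D - {c})) ` {T \<in> syt D. T c = ?n} \<subseteq> syt (D - {c})"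
    proof clarify
      fix T assume T: "T \<in> syt D" and Tc: "T c = ?n"
      have bij: "bij_betw T D {1..?n}" and r: "\<forall>i j. (i, j + 1) \<in> D \<longrightarrow> T (i, j) < T (i, j + 1)"
        and co: "\<forall>i j. (i + 1, j) \<in> D \<longrightarrow> T (i, j) < T (i + 1, j)" using syt_bij[OF T] syt_row[OF T] syt_col[OF T] by (blast+)
      have bij2: "bij_betw T (D - {c}) ({1..?n} - {?n})"
        using bij_betw_DiffI[OF bij, of "{c}" "{?n}"] cD Tc npos by auto
      have eq: "{1..?n} - {?n} = {1..card (D - {c})}" using cardD' npos by auto
      have bij3: "bij_betw (restrict T (D - {c})) (D - {c}) {1..card (D - {c})}"
        using bij2 eq bij_betw_cong[of "D - {c}" "restrict T (D - {c})" T "{1..card (D - {c})}"] by simp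
      have "T \<in> (D - {c}) \<rightarrow> {1..card (D - {c})}" using bij_betw_imp_funcset[OF bij2] eq by simp
      hence pie: "restrict T (D - {c}) \<in> (D - {c}) \<rightarrow>\<^sub>E {1..card (D - {c})}"
        by (simp only: restrict_PiE)
      have row: "\<forall>i j. (i, j + 1) \<in> D - {c} \<longrightarrow> restrict T (D - {c}) (i, j) < restrict T (D - {c}) (i, j + 1)"
      proof (intro allI impI)
        fix i j assume ij: "(i, j + 1) \<in> D - {c}"
        have "(i, j) \<in> D" using ideal_row[OF id] ij by blast
        moreover have "(i, j) \<noteq> c" using ij mx1 cc by auto
        ultimately show "restrict T (D - {c}) (i, j) < restrict T (D - {c}) (i, j + 1)"
          using ij r by simp
      qed
      have col: "\<forall>i j. (i + 1, j) \<in> D - {c} \<longrightarrow> restrict T (D - {c}) (i, j) < restrict T (D - {c}) (i + 1, j)"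
      proof (intro allI impI)
        fix i j assume ij: "(i + 1, j) \<in> D - {c}"
        have "(i, j) \<in> D" using ideal_col[OF id] ij by blast
        moreover have "(i, j) \<noteq> c" using ij mx2 cc by auto
        ultimately show "restrict T (D - {c}) (i, j) < restrict T (D - {c}) (i + 1, j)"
          using ij co by simp
      qed
      show "restrict T (D - {c}) \<in> syt (D - {c})"
        unfolding syt_def using pie bij3 row col by blast
    qed
    show "(\<lambda>T. T(c := ?n)) ` syt (D - {c}) \<subseteq> {T \<in> syt D. T c = ?n}"
    proof clarify
      fix T assume T: "T \<in> syt (D - {c})"
      have bij: "bij_betw T (D - {c}) {1..card (D - {c})}" and r: "\<forall>i j. (i, j + 1) \<in> D - {c} \<longrightarrow> T (i, j) < T (i, j + 1)"
        and co: "\<forall>i j. (i + 1, j) \<in> D - {c} \<longrightarrow> T (i, j) < T (i + 1, j)"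
        and Text: "T \<in> extensional (D - {c})" using syt_bij[OF T] syt_row[OF T] syt_col[OF T] syt_ext[OF T] by (blast+)
      have eq: "{1..card (D - {c})} = {1..?n} - {?n}" using cardD' npos by auto
      have bij1: "bij_betw (T(c := ?n)) (D - {c}) ({1..?n} - {?n})"
        using bij eq bij_betw_cong[of "D - {c}" "T(c := ?n)" T "{1..card (D - {c})}"] by simp
      have "bij_betw (T(c := ?n)) ((D - {c}) \<union> {c}) (({1..?n} - {?n}) \<union> {(T(c := ?n)) c})"
        by (rule notIn_Un_bij_betw) (use bij1 in auto)
      moreover have "(D - {c}) \<union> {c} = D" using cD by auto
      moreover have "({1..?n} - {?n}) \<union> {(T(c := ?n)) c} = {1..?n}" using npos by auto
      ultimately have bijD: "bij_betw (T(c := ?n)) D {1..?n}" by simp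
      have vals: "x \<in> D - {c} \<Longrightarrow> T x \<le> ?n - 1" for x
        using bij_betwE[OF bij] cardD' by fastforce
      have "T(c := ?n) \<in> D \<rightarrow> {1..?n}" by (rule bij_betw_imp_funcset[OF bijD])
      moreover have "T(c := ?n) \<in> extensional D" unfolding extensional_def using cD extensional_arb[OF Text] by auto
      ultimately have pie: "T(c := ?n) \<in> D \<rightarrow>\<^sub>E {1..?n}" by (simp add: PiE_def)
      have row: "\<forall>i j. (i, j + 1) \<in> D \<longrightarrow> (T(c := ?n)) (i, j) < (T(c := ?n)) (i, j + 1)"
      proof (intro allI impI)
        fix i j assume ij: "(i, j + 1) \<in> D"
        have ijD: "(i, j) \<in> D" using ideal_row[OF id ij] .
        show "(T(c := ?n)) (i, j) < (T(c := ?n)) (i, j + 1)"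
        proof (cases "(i, j + 1) = c")
          case True
          hence "(i, j) \<noteq> c" by auto
          thus ?thesis using True vals[of "(i,j)"] ijD npos by auto
        next
          case False
          have "(i, j) \<noteq> c" using False ij mx1 cc by auto
          thus ?thesis using False r ij by auto
        qed
      qed
      have col: "\<forall>i j. (i + 1, j) \<in> D \<longrightarrow> (T(c := ?n)) (i, j) < (T(c := ?n)) (i + 1, j)"
      proof (intro allI impI)
        fix i j assume ij: "(i + 1, j) \<in> D"
        have ijD: "(i, j) \<in> D" using ideal_col[OF id ij] .
        show "(T(c := ?n)) (i, j) < (T(c := ?n)) (i + 1, j)"
        proof (cases "(i + 1, j) = c")
          case True
          hence "(i, j) \<noteq> c" by auto
          thus ?thesis using True vals[of "(i,j)"] ijD npos by auto
        next
          case False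
          have "(i, j) \<noteq> c" using False ij mx2 cc by auto
          thus ?thesis using False co ij by auto
        qed
      qed
      have "T(c := ?n) \<in> syt D"
        unfolding syt_def using pie bijD row col by blast
      thus "T(c := ?n) \<in> syt D \<and> (T(c := ?n)) c = ?n" by simp
    qed
  qed
qed

lemma branching:
  assumes fin: "finite D" and id: "ideal D" and ne: "D \<noteq> {}"
  shows "card (syt D) = (\<Sum>c\<in>Maxc D. card (syt (D - {c})))"
proof -
  let ?n = "card D"
  have "?n > 0" using fin ne by (auto simp: card_gt_0_iff)
  hence npos: "?n \<ge> 1" by simp
  have eq: "syt D = (\<Union>c\<in>Maxc D. {T \<in> syt D. T c = ?n})"
  proof
    show "syt D \<subseteq> (\<Union>c\<in>Maxc D. {T \<in> syt D. T c = ?n})"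
    proof
      fix T assume T: "T \<in> syt D"
      have bij: "bij_betw T D {1..?n}" and r: "\<forall>i j. (i, j + 1) \<in> D \<longrightarrow> T (i, j) < T (i, j + 1)"
        and co: "\<forall>i j. (i + 1, j) \<in> D \<longrightarrow> T (i, j) < T (i + 1, j)" using syt_bij[OF T] syt_row[OF T] syt_col[OF T] by (blast+)
      have "?n \<in> T ` D" using bij npos by (auto simp: bij_betw_def)
      then obtain c where cD: "c \<in> D" and Tc: "T c = ?n" by auto
      obtain ci cj where cc: "c = (ci, cj)" by (cases c)
      have le: "x \<in> D \<Longrightarrow> T x \<le> ?n" for x using bij_betwE[OF bij] by fastforce
      have "(ci, cj + 1) \<notin> D"
      proof
        assume a: "(ci, cj + 1) \<in> D"
        have "T (ci, cj) < T (ci, cj + 1)" using r a by blast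
        thus False using le[OF a] Tc cc by simp
      qed
      moreover have "(ci + 1, cj) \<notin> D"
      proof
        assume a: "(ci + 1, cj) \<in> D"
        have "T (ci, cj) < T (ci + 1, cj)" using co a by blast
        thus False using le[OF a] Tc cc by simp
      qed
      ultimately have "c \<in> Maxc D"
        using cD cc unfolding Maxc_def by simp
      thus "T \<in> (\<Union>c\<in>Maxc D. {T \<in> syt D. T c = ?n})" using T Tc by auto
    qed
  qed blast
  have "card (syt D) = card (\<Union>c\<in>Maxc D. {T \<in> syt D. T c = ?n})"
    using arg_cong[OF eq, of card] .
  also have "\<dots> = (\<Sum>c\<in>Maxc D. card {T \<in> syt D. T c = ?n})"
  proof (rule card_UN_disjoint)
    show "finite (Maxc D)" using fin by (rule finite_subset[rotated]) (auto simp: Maxc_def)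
    show "\<forall>i\<in>Maxc D. finite {T \<in> syt D. T i = ?n}" using finite_syt[OF fin] by auto
    show "\<forall>i\<in>Maxc D. \<forall>j\<in>Maxc D. i \<noteq> j \<longrightarrow> {T \<in> syt D. T i = ?n} \<inter> {T \<in> syt D. T j = ?n} = {}"
    proof (intro ballI impI)
      fix i j assume i: "i \<in> Maxc D" and j: "j \<in> Maxc D" and ne: "i \<noteq> j"
      show "{T \<in> syt D. T i = ?n} \<inter> {T \<in> syt D. T j = ?n} = {}"
      proof (rule ccontr)
        assume "{T \<in> syt D. T i = ?n} \<inter> {T \<in> syt D. T j = ?n} \<noteq> {}"
        then obtain T where T: "T \<in> syt D" "T i = ?n" "T j = ?n" by blast
        have "inj_on T D" using syt_bij[OF T(1)] by (simp add: bij_betw_def)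
        moreover have "i \<in> D" "j \<in> D" using i j by (auto simp: Maxc_def)
        ultimately have "i = j" using T by (metis inj_onD)
        thus False using ne by simp
      qed
    qed
  qed
  also have "\<dots> = (\<Sum>c\<in>Maxc D. card (syt (D - {c})))"
    by (rule sum.cong) (auto intro: card_fix[OF fin id])
  finally show ?thesis .
qed



definition HK :: "nat \<Rightarrow> nat \<Rightarrow> (nat \<times> nat) set" where
  "HK p e = {(i, j). (i = 0 \<and> j < p) \<or> (1 \<le> i \<and> i \<le> e \<and> j = 0)}"

lemma HK_fin: "finite (HK p e)"
  by (rule finite_subset[of _ "{..p+e} \<times> {..p+e}"]) (auto simp: HK_def)

lemma HK_ideal: "p \<ge> 1 \<Longrightarrow> ideal (HK p e)"
  unfolding ideal_def HK_def by auto

lemma HK_Maxc: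
  assumes "p \<ge> 1"
  shows "Maxc (HK p e) = (if p \<ge> 2 \<or> e = 0 then {(0, p - 1)} else {}) \<union> (if e \<ge> 1 then {(e, 0)} else {})"
  using assms unfolding Maxc_def HK_def by (auto split: if_splits)

lemma HK_rem1: "p \<ge> 2 \<Longrightarrow> HK p e - {(0, p - 1)} = HK (p - 1) e"
  unfolding HK_def by auto
lemma HK_rem2: "e \<ge> 1 \<Longrightarrow> HK p e - {(e, 0)} = HK p (e - 1)"
  unfolding HK_def by auto
lemma HK_10: "HK 1 0 - {(0, 0)} = {}"
  unfolding HK_def by auto

lemma HK_count: "p \<ge> 1 \<Longrightarrow> card (syt (HK p e)) = (p + e - 1) choose e"
proof (induction "p + e" arbitrary: p e rule: less_induct)
  case less
  have "(0, 0) \<in> HK p e" using less.prems unfolding HK_def by auto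
  hence ne: "HK p e \<noteq> {}" by blast
  have br: "card (syt (HK p e)) = (\<Sum>c\<in>Maxc (HK p e). card (syt (HK p e - {c})))"
    by (rule branching[OF HK_fin HK_ideal[OF less.prems] ne])
  show ?case
  proof (cases "e = 0")
    case e0: True
    show ?thesis
    proof (cases "p \<ge> 2")
      case True
      have "card (syt (HK p e)) = card (syt (HK (p - 1) e))"
        using br HK_Maxc[OF less.prems] e0 True HK_rem1[OF True] by simp
      also have "\<dots> = (p - 1 + e - 1) choose e" using less.hyps[of "p - 1" e] True by simp
      finally show ?thesis using e0 by simp
    next
      case False
      hence "p = 1" using less.prems by simp
      hence "card (syt (HK p e)) = card (syt (HK 1 0 - {(0, 0)}))"
        using br HK_Maxc[OF less.prems] e0 by simp
      also have "\<dots> = 1" unfolding HK_10 by (rule syt_empty)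
      finally show ?thesis using e0 by simp
    qed
  next
    case False
    hence e1: "e \<ge> 1" by simp
    show ?thesis
    proof (cases "p \<ge> 2")
      case True
      have "card (syt (HK p e)) = card (syt (HK (p - 1) e)) + card (syt (HK p (e - 1)))"
        using br HK_Maxc[OF less.prems] e1 True HK_rem1[OF True] HK_rem2[OF e1] by simp
      also have "\<dots> = ((p - 1 + e - 1) choose e) + ((p + (e - 1) - 1) choose (e - 1))"
        using less.hyps[of "p - 1" e] less.hyps[of p "e - 1"] True e1 by simp
      also have "\<dots> = (p + e - 1) choose e"
      proof -
        obtain k where k: "e = Suc k" using e1 by (cases e) auto
        have a: "p - 1 + e - 1 = p + k - 1" "p + (e - 1) - 1 = p + k - 1" "p + e - 1 = Suc (p + k - 1)"
          using True k by auto
        show ?thesis unfolding a unfolding k binomial_Suc_Suc by simp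
      qed
      finally show ?thesis .
    next
      case False
      hence p1: "p = 1" using less.prems by simp
      have "card (syt (HK p e)) = card (syt (HK p (e - 1)))"
        using br HK_Maxc[OF less.prems] e1 p1 HK_rem2[OF e1] by simp
      also have "\<dots> = (p + (e - 1) - 1) choose (e - 1)"
        using less.hyps[of p "e - 1"] e1 p1 by simp
      finally show ?thesis using p1 e1 by simp
    qed
  qed
qed



definition G :: "nat \<Rightarrow> nat \<Rightarrow> nat \<Rightarrow> nat \<Rightarrow> real" where
  "G p q c d = fact (p + q + 2 * c + d) * real (p - q + 1) * real (d + 1) /
     (real (p + c + d + 1) * real (p + c) * fact (p - 1) * real (q + c + d) * real (q + c - 1)
      * fact (q - 2) * fact c * fact (c + d + 1))"

lemma frac_ratio:
  fixes n1 d1 n2 d2 rn rd :: real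
  assumes "d1 \<noteq> 0" "d2 \<noteq> 0" "rd \<noteq> 0" "n1 * d2 * rd = n2 * rn * d1"
  shows "n1 / d1 = n2 / d2 * (rn / rd)"
  using assms by (simp add: field_simps)

definition rA :: "real \<Rightarrow> real \<Rightarrow> real \<Rightarrow> real \<Rightarrow> real" where
  "rA P Q C Dd = ((P + C + Dd + 1) * (P + C) * (P - 1) * (P - Q)) /
      ((P + Q + 2 * C + Dd) * (P + C + Dd) * (P + C - 1) * (P - Q + 1))"

lemma GA:
  assumes "q \<ge> 2" "p \<ge> q + 1"
  shows "G (p - 1) q c d = G p q c d * rA (real p) (real q) (real c) (real d)"
proof -
  have n: "fact (p + q + 2 * c + d) = real (p + q + 2 * c + d) * (fact (p - 1 + q + 2 * c + d) :: real)"
    using assms fact_Suc[of "p - 1 + q + 2 * c + d"] by (simp add: Suc_diff_le)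
  have pf: "fact (p - 1) = real (p - 1) * (fact (p - 1 - 1) :: real)"
    by (rule fact_reduce) (use assms in simp)
  define X where "X = (fact (p - 1 + q + 2 * c + d) :: real)"
  define Y where "Y = (fact (p - 1 - 1) :: real)"
  define Z where "Z = (fact (q - 2) :: real)"
  define W where "W = (fact c :: real)"
  define V where "V = (fact (c + d + 1) :: real)"
  define P where "P = real p"
  define Q where "Q = real q"
  define C where "C = real c"
  define Dd where "Dd = real d"
  have nz: "X > 0" "Y > 0" "Z > 0" "W > 0" "V > 0" by (simp_all add: X_def Y_def Z_def W_def V_def)
  have hy: "Q \<ge> 2" "P \<ge> Q + 1" "C \<ge> 0" "Dd \<ge> 0" using assms by (simp_all add: P_def Q_def C_def Dd_def)
  have cs: "real (p - 1 - q + 1) = P - Q" "real (d + 1) = Dd + 1" "real (p - 1 + c + d + 1) = P + C + Dd"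
    "real (p - 1 + c) = P - 1 + C" "real (q + c + d) = Q + C + Dd" "real (q + c - 1) = Q + C - 1"
    "real (p + q + 2 * c + d) = P + Q + 2 * C + Dd" "real (p - q + 1) = P - Q + 1"
    "real (p + c + d + 1) = P + C + Dd + 1" "real (p + c) = P + C" "real (p - 1) = P - 1"
    using assms by (simp_all add: P_def Q_def C_def Dd_def of_nat_diff)
  have e1: "G (p - 1) q c d = X * (P - Q) * (Dd + 1) /
     ((P + C + Dd) * (P - 1 + C) * Y * (Q + C + Dd) * (Q + C - 1) * Z * W * V)"
    unfolding G_def X_def Y_def Z_def W_def V_def cs ..
  have e2: "G p q c d = (P + Q + 2 * C + Dd) * X * (P - Q + 1) * (Dd + 1) /
     ((P + C + Dd + 1) * (P + C) * ((P - 1) * Y) * (Q + C + Dd) * (Q + C - 1) * Z * W * V)"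
    unfolding G_def X_def Y_def Z_def W_def V_def n pf cs ..
  show ?thesis unfolding e1 e2 rA_def P_def[symmetric] Q_def[symmetric] C_def[symmetric] Dd_def[symmetric]
  proof (rule frac_ratio)
    show "(P + C + Dd) * (P - 1 + C) * Y * (Q + C + Dd) * (Q + C - 1) * Z * W * V \<noteq> 0"
      using hy nz by simp
    show "(P + C + Dd + 1) * (P + C) * ((P - 1) * Y) * (Q + C + Dd) * (Q + C - 1) * Z * W * V \<noteq> 0"
      using hy nz by simp
    show "(P + Q + 2 * C + Dd) * (P + C + Dd) * (P + C - 1) * (P - Q + 1) \<noteq> 0"
      using hy nz by simp
  qed algebra
qed

definition rB :: "real \<Rightarrow> real \<Rightarrow> real \<Rightarrow> real \<Rightarrow> real" where
  "rB P Q C Dd = ((Q + C + Dd) * (Q + C - 1) * (Q - 2) * (P - Q + 2)) /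
      ((P + Q + 2 * C + Dd) * (Q - 1 + C + Dd) * (Q + C - 2) * (P - Q + 1))"

lemma GB:
  assumes "q \<ge> 3" "p \<ge> q"
  shows "G p (q - 1) c d = G p q c d * rB (real p) (real q) (real c) (real d)"
proof -
  have nn: "Suc (p + (q - 1) + 2 * c + d) = p + q + 2 * c + d" using assms by simp
  have qq: "Suc (q - 1 - 2) = q - 2" using assms by simp
  define X where "X = (fact (p + (q - 1) + 2 * c + d) :: real)"
  define Y where "Y = (fact (p - 1) :: real)"
  define Z where "Z = (fact (q - 1 - 2) :: real)"
  define W where "W = (fact c :: real)"
  define V where "V = (fact (c + d + 1) :: real)"
  define P where "P = real p"
  define Q where "Q = real q"
  define C where "C = real c"
  define Dd where "Dd = real d"
  have n: "fact (p + q + 2 * c + d) = real (p + q + 2 * c + d) * X"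
    using fact_Suc[of "p + (q - 1) + 2 * c + d", unfolded nn] unfolding X_def by simp
  have qf: "fact (q - 2) = real (q - 2) * Z"
    using fact_Suc[of "q - 1 - 2", unfolded qq] unfolding Z_def by simp
  have nz: "X > 0" "Y > 0" "Z > 0" "W > 0" "V > 0" by (simp_all add: X_def Y_def Z_def W_def V_def)
  have hy: "Q \<ge> 3" "P \<ge> Q" "C \<ge> 0" "Dd \<ge> 0" using assms by (simp_all add: P_def Q_def C_def Dd_def)
  have cs: "real (p - (q - 1) + 1) = P - Q + 2" "real (d + 1) = Dd + 1" "real (p + c + d + 1) = P + C + Dd + 1"
    "real (p + c) = P + C" "real (q - 1 + c + d) = Q - 1 + C + Dd" "real (q - 1 + c - 1) = Q + C - 2"
    "real (p + q + 2 * c + d) = P + Q + 2 * C + Dd" "real (p - q + 1) = P - Q + 1"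
    "real (q + c + d) = Q + C + Dd" "real (q + c - 1) = Q + C - 1" "real (q - 2) = Q - 2"
    using assms by (simp_all add: P_def Q_def C_def Dd_def of_nat_diff)
  have e1: "G p (q - 1) c d = X * (P - Q + 2) * (Dd + 1) /
     ((P + C + Dd + 1) * (P + C) * Y * (Q - 1 + C + Dd) * (Q + C - 2) * Z * W * V)"
    unfolding G_def X_def[symmetric] Y_def[symmetric] Z_def[symmetric] W_def[symmetric] V_def[symmetric] cs ..
  have e2: "G p q c d = (P + Q + 2 * C + Dd) * X * (P - Q + 1) * (Dd + 1) /
     ((P + C + Dd + 1) * (P + C) * Y * (Q + C + Dd) * (Q + C - 1) * ((Q - 2) * Z) * W * V)"
    unfolding G_def n qf Y_def[symmetric] W_def[symmetric] V_def[symmetric] cs ..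
  show ?thesis unfolding e1 e2 rB_def P_def[symmetric] Q_def[symmetric] C_def[symmetric] Dd_def[symmetric]
  proof (rule frac_ratio)
    show "(P + C + Dd + 1) * (P + C) * Y * (Q - 1 + C + Dd) * (Q + C - 2) * Z * W * V \<noteq> 0"
      using hy nz by simp
    show "(P + C + Dd + 1) * (P + C) * Y * (Q + C + Dd) * (Q + C - 1) * ((Q - 2) * Z) * W * V \<noteq> 0"
      using hy nz by simp
    show "(P + Q + 2 * C + Dd) * (Q - 1 + C + Dd) * (Q + C - 2) * (P - Q + 1) \<noteq> 0"
      using hy nz by simp
  qed algebra
qed

definition rC :: "real \<Rightarrow> real \<Rightarrow> real \<Rightarrow> real \<Rightarrow> real" where
  "rC P Q C Dd = ((P + C) * (Q + C - 1) * C * (Dd + 2)) /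
      ((P + Q + 2 * C + Dd) * (P + C - 1) * (Q + C - 2) * (Dd + 1))"

lemma GC:
  assumes "q \<ge> 2" "p \<ge> q" "c \<ge> 1"
  shows "G p q (c - 1) (d + 1) = G p q c d * rC (real p) (real q) (real c) (real d)"
proof -
  have nn: "Suc (p + q + 2 * (c - 1) + (d + 1)) = p + q + 2 * c + d" using assms by simp
  have cc: "Suc (c - 1) = c" using assms by simp
  have vv: "c - 1 + (d + 1) + 1 = c + d + 1" using assms by simp
  define X where "X = (fact (p + q + 2 * (c - 1) + (d + 1)) :: real)"
  define Y where "Y = (fact (p - 1) :: real)"
  define Z where "Z = (fact (q - 2) :: real)"
  define W where "W = (fact (c - 1) :: real)"
  define V where "V = (fact (c + d + 1) :: real)"
  define P where "P = real p"
  define Q where "Q = real q"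
  define C where "C = real c"
  define Dd where "Dd = real d"
  have n: "fact (p + q + 2 * c + d) = real (p + q + 2 * c + d) * X"
    using fact_Suc[of "p + q + 2 * (c - 1) + (d + 1)", unfolded nn] unfolding X_def by simp
  have cf: "fact c = real c * W"
    using fact_Suc[of "c - 1", unfolded cc] unfolding W_def by simp
  have nz: "X > 0" "Y > 0" "Z > 0" "W > 0" "V > 0" by (simp_all add: X_def Y_def Z_def W_def V_def)
  have hy: "Q \<ge> 2" "P \<ge> Q" "C \<ge> 1" "Dd \<ge> 0" using assms by (simp_all add: P_def Q_def C_def Dd_def)
  have cs: "real (p - q + 1) = P - Q + 1" "real (d + 1 + 1) = Dd + 2" "real (p + (c - 1) + (d + 1) + 1) = P + C + Dd + 1"
    "real (p + (c - 1)) = P + C - 1" "real (q + (c - 1) + (d + 1)) = Q + C + Dd" "real (q + (c - 1) - 1) = Q + C - 2"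
    "real (p + q + 2 * c + d) = P + Q + 2 * C + Dd" "real (d + 1) = Dd + 1" "real (p + c + d + 1) = P + C + Dd + 1"
    "real (p + c) = P + C" "real (q + c + d) = Q + C + Dd" "real (q + c - 1) = Q + C - 1" "real c = C"
    using assms by (simp_all add: P_def Q_def C_def Dd_def of_nat_diff)
  have e1: "G p q (c - 1) (d + 1) = X * (P - Q + 1) * (Dd + 2) /
     ((P + C + Dd + 1) * (P + C - 1) * Y * (Q + C + Dd) * (Q + C - 2) * Z * W * V)"
    unfolding G_def vv X_def[symmetric] Y_def[symmetric] Z_def[symmetric] W_def[symmetric] V_def[symmetric] cs ..
  have e2: "G p q c d = (P + Q + 2 * C + Dd) * X * (P - Q + 1) * (Dd + 1) /
     ((P + C + Dd + 1) * (P + C) * Y * (Q + C + Dd) * (Q + C - 1) * Z * (C * W) * V)"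
    unfolding G_def n cf Y_def[symmetric] Z_def[symmetric] V_def[symmetric] cs ..
  show ?thesis unfolding e1 e2 rC_def P_def[symmetric] Q_def[symmetric] C_def[symmetric] Dd_def[symmetric]
  proof (rule frac_ratio)
    show "(P + C + Dd + 1) * (P + C - 1) * Y * (Q + C + Dd) * (Q + C - 2) * Z * W * V \<noteq> 0"
      using hy nz by simp
    show "(P + C + Dd + 1) * (P + C) * Y * (Q + C + Dd) * (Q + C - 1) * Z * (C * W) * V \<noteq> 0"
      using hy nz by simp
    show "(P + Q + 2 * C + Dd) * (P + C - 1) * (Q + C - 2) * (Dd + 1) \<noteq> 0"
      using hy nz by simp
  qed algebra
qed

definition rD :: "real \<Rightarrow> real \<Rightarrow> real \<Rightarrow> real \<Rightarrow> real" where
  "rD P Q C Dd = ((P + C + Dd + 1) * (Q + C + Dd) * (C + Dd + 1) * Dd) /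
      ((P + Q + 2 * C + Dd) * (P + C + Dd) * (Q + C + Dd - 1) * (Dd + 1))"

lemma GD:
  assumes "q \<ge> 2" "p \<ge> q" "d \<ge> 1"
  shows "G p q c (d - 1) = G p q c d * rD (real p) (real q) (real c) (real d)"
proof -
  have nn: "Suc (p + q + 2 * c + (d - 1)) = p + q + 2 * c + d" using assms by simp
  have dd: "Suc (c + (d - 1) + 1) = c + d + 1" using assms by simp
  define X where "X = (fact (p + q + 2 * c + (d - 1)) :: real)"
  define Y where "Y = (fact (p - 1) :: real)"
  define Z where "Z = (fact (q - 2) :: real)"
  define W where "W = (fact c :: real)"
  define V where "V = (fact (c + (d - 1) + 1) :: real)"
  define P where "P = real p"
  define Q where "Q = real q"
  define C where "C = real c"
  define Dd where "Dd = real d"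
  have n: "fact (p + q + 2 * c + d) = real (p + q + 2 * c + d) * X"
    using fact_Suc[of "p + q + 2 * c + (d - 1)", unfolded nn] unfolding X_def by simp
  have vf: "fact (c + d + 1) = real (c + d + 1) * V"
    unfolding V_def by (rule fact_Suc[of "c + (d - 1) + 1", unfolded dd])
  have nz: "X > 0" "Y > 0" "Z > 0" "W > 0" "V > 0" by (simp_all add: X_def Y_def Z_def W_def V_def)
  have hy: "Q \<ge> 2" "P \<ge> Q" "C \<ge> 0" "Dd \<ge> 1" using assms by (simp_all add: P_def Q_def C_def Dd_def)
  have cs: "real (p - q + 1) = P - Q + 1" "real (d - 1 + 1) = Dd" "real (p + c + (d - 1) + 1) = P + C + Dd"
    "real (p + c) = P + C" "real (q + c + (d - 1)) = Q + C + Dd - 1" "real (q + c - 1) = Q + C - 1"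
    "real (p + q + 2 * c + d) = P + Q + 2 * C + Dd" "real (d + 1) = Dd + 1" "real (p + c + d + 1) = P + C + Dd + 1"
    "real (q + c + d) = Q + C + Dd" "real (c + d + 1) = C + Dd + 1"
    using assms by (simp_all add: P_def Q_def C_def Dd_def of_nat_diff)
  have e1: "G p q c (d - 1) = X * (P - Q + 1) * Dd /
     ((P + C + Dd) * (P + C) * Y * (Q + C + Dd - 1) * (Q + C - 1) * Z * W * V)"
    unfolding G_def X_def[symmetric] Y_def[symmetric] Z_def[symmetric] W_def[symmetric] V_def[symmetric] cs ..
  have e2: "G p q c d = (P + Q + 2 * C + Dd) * X * (P - Q + 1) * (Dd + 1) /
     ((P + C + Dd + 1) * (P + C) * Y * (Q + C + Dd) * (Q + C - 1) * Z * W * ((C + Dd + 1) * V))"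
    unfolding G_def n vf Y_def[symmetric] Z_def[symmetric] W_def[symmetric] cs ..
  show ?thesis unfolding e1 e2 rD_def P_def[symmetric] Q_def[symmetric] C_def[symmetric] Dd_def[symmetric]
  proof (rule frac_ratio)
    show "(P + C + Dd) * (P + C) * Y * (Q + C + Dd - 1) * (Q + C - 1) * Z * W * V \<noteq> 0"
      using hy nz by simp
    show "(P + C + Dd + 1) * (P + C) * Y * (Q + C + Dd) * (Q + C - 1) * Z * W * ((C + Dd + 1) * V) \<noteq> 0"
      using hy nz by simp
    show "(P + Q + 2 * C + Dd) * (P + C + Dd) * (Q + C + Dd - 1) * (Dd + 1) \<noteq> 0"
      using hy nz by simp
  qed algebra
qed

definition rB0 :: "real \<Rightarrow> real \<Rightarrow> real \<Rightarrow> real" where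
  "rB0 P Q Dd = ((Q + Dd) * (Q - 1) * (P - Q + 2)) / ((P + Q + Dd) * (Q + Dd - 1) * (P - Q + 1))"

lemma GBh:
  assumes "p \<ge> 2"
  shows "real ((p + d) choose (d + 1)) = G p 2 0 d * rB0 (real p) 2 (real d)"
proof -
  have nn: "Suc (Suc (p + d)) = p + 2 + 2 * 0 + d" by simp
  define X where "X = (fact (p + d) :: real)"
  define Y where "Y = (fact (p - 1) :: real)"
  define V where "V = (fact (d + 1) :: real)"
  define P where "P = real p"
  define Dd where "Dd = real d"
  have n: "fact (p + 2 + 2 * 0 + d) = real (p + d + 2) * (real (p + d + 1) * X)"
    unfolding X_def nn[symmetric] fact_Suc by simp
  have bf: "real ((p + d) choose (d + 1)) = X / (V * Y)"
    unfolding X_def V_def Y_def using binomial_fact[of "d + 1" "p + d", where 'a = real] assms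
    by (simp add: add.commute)
  have fs: "fact (2 - 2) = (1::real)" "fact (0 + d + 1) = V" by (simp_all add: V_def)
  have nz: "X > 0" "Y > 0" "V > 0" by (simp_all add: X_def Y_def V_def)
  have hy: "P \<ge> 2" "Dd \<ge> 0" using assms by (simp_all add: P_def Dd_def)
  have cs: "real (p - 2 + 1) = P - 1" "real (d + 1) = Dd + 1" "real (p + 0 + d + 1) = P + Dd + 1"
    "real (p + 0) = P" "real (2 + 0 + d) = Dd + 2" "real (2 + 0 - 1) = 1"
    "real (p + d + 2) = P + Dd + 2" "real (p + d + 1) = P + Dd + 1"
    using assms by (simp_all add: P_def Dd_def of_nat_diff)
  have e2: "G p 2 0 d = real (p + d + 2) * (real (p + d + 1) * X) * real (p - 2 + 1) * real (d + 1) /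
     (real (p + 0 + d + 1) * real (p + 0) * Y * real (2 + 0 + d) * real (2 + 0 - 1) * fact (2 - 2) * fact 0 * fact (0 + d + 1))"
    unfolding G_def n Y_def ..
  have e2': "G p 2 0 d = (P + Dd + 2) * ((P + Dd + 1) * X) * (P - 1) * (Dd + 1) /
     ((P + Dd + 1) * P * Y * (Dd + 2) * 1 * 1 * 1 * V)"
    unfolding e2 cs fs by simp
  show ?thesis unfolding bf e2' rB0_def P_def[symmetric] Dd_def[symmetric]
  proof (rule frac_ratio)
    show "V * Y \<noteq> 0" using nz by simp
    show "(P + Dd + 1) * P * Y * (Dd + 2) * 1 * 1 * 1 * V \<noteq> 0" using hy nz by simp
    show "(P + 2 + Dd) * (2 + Dd - 1) * (P - 2 + 1) \<noteq> 0" using hy by simp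
  qed algebra
qed

lemma sum4:
  fixes x y z w a b c d ka kb kc kd M :: real
  assumes "M \<noteq> 0" "a * ka = M" "b * kb = M" "c * kc = M" "d * kd = M"
    "x * ka + y * kb + z * kc + w * kd = M"
  shows "x/a + y/b + z/c + w/d = 1"
proof -
  have nz: "a \<noteq> 0" "b \<noteq> 0" "c \<noteq> 0" "d \<noteq> 0" "ka \<noteq> 0" "kb \<noteq> 0" "kc \<noteq> 0" "kd \<noteq> 0"
    using assms by auto
  have "x/a = x * ka / M" "y/b = y * kb / M" "z/c = z * kc / M" "w/d = w * kd / M"
    using assms(2-5) nz by (auto simp: field_simps)
  hence "x/a + y/b + z/c + w/d = (x * ka + y * kb + z * kc + w * kd) / M" by (simp add: add_divide_distrib)
  thus ?thesis using assms by simp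
qed

lemma sum3:
  fixes x y w a b d ka kb kd M :: real
  assumes "M \<noteq> 0" "a * ka = M" "b * kb = M" "d * kd = M"
    "x * ka + y * kb + w * kd = M"
  shows "x/a + y/b + w/d = 1"
proof -
  have nz: "a \<noteq> 0" "b \<noteq> 0" "d \<noteq> 0" "ka \<noteq> 0" "kb \<noteq> 0" "kd \<noteq> 0"
    using assms by auto
  have "x/a = x * ka / M" "y/b = y * kb / M" "w/d = w * kd / M"
    using assms(2-4) nz by (auto simp: field_simps)
  hence "x/a + y/b + w/d = (x * ka + y * kb + w * kd) / M" by (simp add: add_divide_distrib)
  thus ?thesis using assms by simp
qed

lemma id4:
  fixes P Q C Dd :: real
  assumes "Q \<ge> 2" "P \<ge> Q" "C \<ge> 1" "Dd \<ge> 0"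
  shows "rA P Q C Dd + rB P Q C Dd + rC P Q C Dd + rD P Q C Dd = 1"
  unfolding rA_def rB_def rC_def rD_def
proof (rule sum4[where ka = "(Q + C + Dd - 1) * (Q + C - 2) * (Dd + 1)"
    and kb = "(P + C + Dd) * (P + C - 1) * (Dd + 1)"
    and kc = "(P + C + Dd) * (P - Q + 1) * (Q + C + Dd - 1)"
    and kd = "(P + C - 1) * (P - Q + 1) * (Q + C - 2)"])
  show "(P + Q + 2 * C + Dd) * ((P + C + Dd) * (P + C - 1) * (P - Q + 1) * (Q + C + Dd - 1) * (Q + C - 2) * (Dd + 1)) \<noteq> 0"
    using assms by simp
qed algebra+

lemma id3:
  fixes P Q Dd :: real
  assumes "Q \<ge> 2" "P \<ge> Q" "Dd \<ge> 0"
  shows "rA P Q 0 Dd + rB0 P Q Dd + rD P Q 0 Dd = 1"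
  unfolding rA_def rB0_def rD_def
proof (rule sum3[where ka = "(Q + Dd - 1) * (Dd + 1)"
    and kb = "(P + Dd) * (P - 1) * (Dd + 1)"
    and kd = "(P - 1) * (P - Q + 1)"])
  show "(P + Q + Dd) * ((P + Dd) * (P - 1) * (P - Q + 1) * (Q + Dd - 1) * (Dd + 1)) \<noteq> 0"
    using assms by simp
qed algebra+

lemma rB_c0:
  assumes "Q \<ge> 3" "P \<ge> Q" "Dd \<ge> 0"
  shows "rB P Q 0 Dd = rB0 P Q Dd"
proof -
  have nz1: "(P + Q + 2 * 0 + Dd) * (Q - 1 + 0 + Dd) * (Q + 0 - 2) * (P - Q + 1) \<noteq> 0" using assms by simp
  have nz2: "(P + Q + Dd) * (Q + Dd - 1) * (P - Q + 1) \<noteq> 0" using assms by simp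
  show ?thesis unfolding rB_def rB0_def frac_eq_eq[OF nz1 nz2] by algebra
qed



definition FH :: "nat \<Rightarrow> nat \<Rightarrow> nat \<Rightarrow> nat \<Rightarrow> (nat \<times> nat) set" where
  "FH p q c d = {(i, j). (i = 0 \<and> j < p) \<or> (i = 1 \<and> j < q) \<or> (2 \<le> i \<and> i < c + 2 \<and> j < 2)
      \<or> (c + 2 \<le> i \<and> i < c + d + 2 \<and> j = 0)}"

lemma FH_fin: "finite (FH p q c d)"
  by (rule finite_subset[of _ "{..p+q+c+d+2} \<times> {..p+q+2}"]) (auto simp: FH_def)

lemma FH_ideal: "q \<ge> 2 \<Longrightarrow> p \<ge> q \<Longrightarrow> ideal (FH p q c d)"
  unfolding ideal_def FH_def by auto

lemma FH_ne: "q \<ge> 2 \<Longrightarrow> p \<ge> q \<Longrightarrow> FH p q c d \<noteq> {}"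
proof -
  assume "q \<ge> 2" "p \<ge> q"
  hence "(0, 0) \<in> FH p q c d" unfolding FH_def by auto
  thus ?thesis by blast
qed

lemma maxc_arith:
  fixes p q c d i j :: nat
  assumes "q \<ge> 2" "p \<ge> q"
  shows "(((i = 0 \<and> j < p) \<or> (i = 1 \<and> j < q) \<or> (2 \<le> i \<and> i < c + 2 \<and> j < 2) \<or> (c + 2 \<le> i \<and> i < c + d + 2 \<and> j = 0))
   \<and> \<not> ((i = 0 \<and> j + 1 < p) \<or> (i = 1 \<and> j + 1 < q) \<or> (2 \<le> i \<and> i < c + 2 \<and> j + 1 < 2) \<or> (c + 2 \<le> i \<and> i < c + d + 2 \<and> j + 1 = 0))
   \<and> \<not> ((i + 1 = 0 \<and> j < p) \<or> (i + 1 = 1 \<and> j < q) \<or> (2 \<le> i + 1 \<and> i + 1 < c + 2 \<and> j < 2) \<or> (c + 2 \<le> i + 1 \<and> i + 1 < c + d + 2 \<and> j = 0)))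
  \<longleftrightarrow> ((p > q \<and> i = 0 \<and> j = p - 1) \<or> ((q > 2 \<or> c = 0) \<and> i = 1 \<and> j = q - 1) \<or> (c > 0 \<and> i = c + 1 \<and> j = 1) \<or> (d > 0 \<and> i = c + d + 1 \<and> j = 0))"
  using assms by (cases "i = 0"; cases "i = 1"; cases "i < c + 2"; cases "i = c + 1"; cases "i < c + d + 2"; cases "i = c + d + 1") auto

lemma FH_Maxc:
  assumes "q \<ge> 2" "p \<ge> q"
  shows "Maxc (FH p q c d) = (if p > q then {(0, p - 1)} else {}) \<union> (if q > 2 \<or> c = 0 then {(1, q - 1)} else {})
     \<union> (if c > 0 then {(c + 1, 1)} else {}) \<union> (if d > 0 then {(c + d + 1, 0)} else {})"
proof (rule set_eqI)
  fix x :: "nat \<times> nat"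
  obtain i j where x: "x = (i, j)" by (cases x)
  have m: "(i, j) \<in> FH p q c d \<longleftrightarrow> ((i = 0 \<and> j < p) \<or> (i = 1 \<and> j < q) \<or> (2 \<le> i \<and> i < c + 2 \<and> j < 2) \<or> (c + 2 \<le> i \<and> i < c + d + 2 \<and> j = 0))"
    for i j unfolding FH_def by simp
  have "x \<in> Maxc (FH p q c d) \<longleftrightarrow> (i, j) \<in> FH p q c d \<and> (i, j + 1) \<notin> FH p q c d \<and> (i + 1, j) \<notin> FH p q c d"
    unfolding Maxc_def x by simp
  also have "\<dots> \<longleftrightarrow> ((p > q \<and> i = 0 \<and> j = p - 1) \<or> ((q > 2 \<or> c = 0) \<and> i = 1 \<and> j = q - 1) \<or> (c > 0 \<and> i = c + 1 \<and> j = 1) \<or> (d > 0 \<and> i = c + d + 1 \<and> j = 0))"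
    unfolding m using maxc_arith[OF assms] .
  also have "\<dots> \<longleftrightarrow> x \<in> (if p > q then {(0, p - 1)} else {}) \<union> (if q > 2 \<or> c = 0 then {(1, q - 1)} else {})
     \<union> (if c > 0 then {(c + 1, 1)} else {}) \<union> (if d > 0 then {(c + d + 1, 0)} else {})"
    unfolding x by auto
  finally show "x \<in> Maxc (FH p q c d) \<longleftrightarrow> x \<in> (if p > q then {(0, p - 1)} else {}) \<union> (if q > 2 \<or> c = 0 then {(1, q - 1)} else {})
     \<union> (if c > 0 then {(c + 1, 1)} else {}) \<union> (if d > 0 then {(c + d + 1, 0)} else {})" .
qed

lemma FH_remA: "q \<ge> 2 \<Longrightarrow> p > q \<Longrightarrow> FH p q c d - {(0, p - 1)} = FH (p - 1) q c d"
  unfolding FH_def by auto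
lemma FH_remB: "q > 2 \<Longrightarrow> p \<ge> q \<Longrightarrow> FH p q c d - {(1, q - 1)} = FH p (q - 1) c d"
  unfolding FH_def by auto
lemma FH_remBh: "p \<ge> 2 \<Longrightarrow> FH p 2 0 d - {(1, 1)} = HK p (d + 1)"
  unfolding FH_def HK_def by auto
lemma FH_remC: "q \<ge> 2 \<Longrightarrow> p \<ge> q \<Longrightarrow> c > 0 \<Longrightarrow> FH p q c d - {(c + 1, 1)} = FH p q (c - 1) (d + 1)"
  unfolding FH_def by auto
lemma FH_remD: "q \<ge> 2 \<Longrightarrow> p \<ge> q \<Longrightarrow> d > 0 \<Longrightarrow> FH p q c d - {(c + d + 1, 0)} = FH p q c (d - 1)"
  unfolding FH_def by auto

lemma sum_ifs:
  assumes "Pa \<Longrightarrow> Pb \<Longrightarrow> a1 \<noteq> a2" "Pa \<Longrightarrow> Pc \<Longrightarrow> a1 \<noteq> a3" "Pa \<Longrightarrow> Pd \<Longrightarrow> a1 \<noteq> a4"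
    "Pb \<Longrightarrow> Pc \<Longrightarrow> a2 \<noteq> a3" "Pb \<Longrightarrow> Pd \<Longrightarrow> a2 \<noteq> a4" "Pc \<Longrightarrow> Pd \<Longrightarrow> a3 \<noteq> a4"
  shows "sum f ((if Pa then {a1} else {}) \<union> (if Pb then {a2} else {}) \<union> (if Pc then {a3} else {}) \<union> (if Pd then {a4} else {}))
    = (if Pa then f a1 else 0) + (if Pb then f a2 else 0) + (if Pc then f a3 else 0) + (if Pd then f a4 else 0)"
  using assms by (cases Pa; cases Pb; cases Pc; cases Pd) (auto simp: insert_commute add.assoc)

theorem FH_count: "q \<ge> 2 \<Longrightarrow> p \<ge> q \<Longrightarrow> real (card (syt (FH p q c d))) = G p q c d"
proof (induction "p + q + 2 * c + d" arbitrary: p q c d rule: less_induct)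
  case less
  note q2 = less.prems(1) and pq = less.prems(2)
  define f where "f = (\<lambda>x. card (syt (FH p q c d - {x})))"
  define P where "P = real p"
  define Q where "Q = real q"
  define C where "C = real c"
  define Dd where "Dd = real d"
  have hy: "Q \<ge> 2" "P \<ge> Q" "C \<ge> 0" "Dd \<ge> 0" using q2 pq by (simp_all add: P_def Q_def C_def Dd_def)
  have "card (syt (FH p q c d)) = (\<Sum>x\<in>Maxc (FH p q c d). f x)"
    unfolding f_def by (rule branching[OF FH_fin FH_ideal[OF q2 pq] FH_ne[OF q2 pq]])
  also have "\<dots> = (if p > q then f (0, p - 1) else 0) + (if q > 2 \<or> c = 0 then f (1, q - 1) else 0)
      + (if c > 0 then f (c + 1, 1) else 0) + (if d > 0 then f (c + d + 1, 0) else 0)"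
    unfolding FH_Maxc[OF q2 pq] by (rule sum_ifs) auto
  finally have br: "real (card (syt (FH p q c d))) = real (if p > q then f (0, p - 1) else 0)
      + real (if q > 2 \<or> c = 0 then f (1, q - 1) else 0)
      + real (if c > 0 then f (c + 1, 1) else 0) + real (if d > 0 then f (c + d + 1, 0) else 0)"
    by simp
  have tA: "real (if p > q then f (0, p - 1) else 0) = G p q c d * rA P Q C Dd"
  proof (cases "p > q")
    case True
    have "real (f (0, p - 1)) = G (p - 1) q c d"
      unfolding f_def FH_remA[OF q2 True] using less.hyps[of "p - 1" q c d] q2 True by simp
    thus ?thesis using True GA[OF q2, of p c d] unfolding P_def Q_def C_def Dd_def by simp
  next
    case False
    hence "P = Q" using pq by (simp add: P_def Q_def)
    thus ?thesis using False by (simp add: rA_def)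
  qed
  have tD: "real (if d > 0 then f (c + d + 1, 0) else 0) = G p q c d * rD P Q C Dd"
  proof (cases "d > 0")
    case True
    have "real (f (c + d + 1, 0)) = G p q c (d - 1)"
      unfolding f_def FH_remD[OF q2 pq True] using less.hyps[of p q c "d - 1"] q2 pq True by simp
    thus ?thesis using True GD[OF q2 pq, of d c] unfolding P_def Q_def C_def Dd_def by simp
  next
    case False
    hence "Dd = 0" by (simp add: Dd_def)
    thus ?thesis using False by (simp add: rD_def)
  qed
  show ?case
  proof (cases "c > 0")
    case cpos: True
    have tC: "real (if c > 0 then f (c + 1, 1) else 0) = G p q c d * rC P Q C Dd"
    proof -
      have "real (f (c + 1, 1)) = G p q (c - 1) (d + 1)"
        unfolding f_def FH_remC[OF q2 pq cpos] using less.hyps[of p q "c - 1" "d + 1"] q2 pq cpos by simp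
      thus ?thesis using cpos GC[OF q2 pq, of c d] unfolding P_def Q_def C_def Dd_def by simp
    qed
    have tB: "real (if q > 2 \<or> c = 0 then f (1, q - 1) else 0) = G p q c d * rB P Q C Dd"
    proof (cases "q > 2")
      case True
      have "real (f (1, q - 1)) = G p (q - 1) c d"
        unfolding f_def FH_remB[OF True pq] using less.hyps[of p "q - 1" c d] True pq by simp
      thus ?thesis using True GB[of q p c d] pq unfolding P_def Q_def C_def Dd_def by simp
    next
      case False
      hence "Q = 2" using q2 by (simp add: Q_def)
      thus ?thesis using False cpos by (simp add: rB_def)
    qed
    have "C \<ge> 1" using cpos by (simp add: C_def)
    hence s1: "rA P Q C Dd + rB P Q C Dd + rC P Q C Dd + rD P Q C Dd = 1" using id4 hy by blast
    have "real (card (syt (FH p q c d))) = G p q c d * (rA P Q C Dd + rB P Q C Dd + rC P Q C Dd + rD P Q C Dd)"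
      unfolding br tA tB tC tD by (simp only: distrib_left)
    thus ?thesis unfolding s1 by simp
  next
    case c0: False
    hence c00: "c = 0" by simp
    have C0: "C = 0" using c0 by (simp add: C_def)
    have tB: "real (if q > 2 \<or> c = 0 then f (1, q - 1) else 0) = G p q c d * rB0 P Q Dd"
    proof (cases "q > 2")
      case True
      have "real (f (1, q - 1)) = G p (q - 1) c d"
        unfolding f_def FH_remB[OF True pq] using less.hyps[of p "q - 1" c d] True pq by simp
      hence "real (if q > 2 \<or> c = 0 then f (1, q - 1) else 0) = G p q c d * rB P Q C Dd"
        using True GB[of q p c d] pq unfolding P_def Q_def C_def Dd_def by simp
      moreover have "rB P Q C Dd = rB0 P Q Dd" unfolding C0 by (rule rB_c0) (use True hy in \<open>auto simp: Q_def\<close>)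
      ultimately show ?thesis by simp
    next
      case False
      hence q22: "q = 2" using q2 by simp
      have "real (f (1, q - 1)) = real ((p + d) choose (d + 1))"
        unfolding f_def q22 c00 using FH_remBh[of p d] HK_count[of p "d + 1"] q22 pq by simp
      also have "\<dots> = G p 2 0 d * rB0 (real p) 2 (real d)" by (rule GBh) (use q22 pq in simp)
      finally show ?thesis using q22 c00 by (simp add: P_def Q_def Dd_def)
    qed
    have s1: "rA P Q C Dd + rB0 P Q Dd + rD P Q C Dd = 1" using id3 hy C0 by blast
    have "real (card (syt (FH p q c d))) = G p q c d * (rA P Q C Dd + rB0 P Q Dd + rD P Q C Dd)"
      unfolding br tA tB tD using c0 by (simp add: distrib_left)
    thus ?thesis unfolding s1 by simp
  qed
qed



lemma decomp2: "(n::nat) > 0 \<Longrightarrow> \<exists>s u. n = 2 ^ s * u \<and> odd u"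
proof -
  assume n: "n > 0"
  obtain y where y: "n = 2 ^ multiplicity 2 n * y" "\<not> 2 dvd y"
    using multiplicity_decompose'[of n 2] n by auto
  thus ?thesis by blast
qed

lemma odd_part_eq: "odd (u::nat) \<Longrightarrow> odd_part (2 ^ s * u) = u"
proof -
  assume u: "odd u"
  have o0: "u \<noteq> 0" using odd_pos[OF u] by simp
  have p2: "prime_elem (2::nat)" by simp
  have "multiplicity 2 (2 ^ s * u) = multiplicity 2 ((2::nat) ^ s) + multiplicity 2 u"
    by (rule prime_elem_multiplicity_mult_distrib) (use o0 in auto)
  also have "multiplicity 2 ((2::nat) ^ s) = s" by (rule multiplicity_prime_power[OF p2])
  also have "multiplicity 2 u = 0" by (rule not_dvd_imp_multiplicity_0) (use u in auto)
  finally have "multiplicity 2 (2 ^ s * u) = s" by simp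
  thus ?thesis unfolding odd_part_def by simp
qed

lemma Od_eq: "odd (u::nat) \<Longrightarrow> Od (2 ^ s * u) = (if u mod 4 = 1 then 1 else -1)"
  unfolding Od_def by (simp add: odd_part_eq)

lemma Od_odd: "odd (u::nat) \<Longrightarrow> Od u = (if u mod 4 = 1 then 1 else -1)"
  using Od_eq[of u 0] by simp

lemma Od_pm: "Od n = 1 \<or> Od n = -1"
  unfolding Od_def by auto

lemma Od_sq: "Od n * Od n = 1"
  using Od_pm[of n] by auto

lemma odd_mod4: "odd (u::nat) \<Longrightarrow> u mod 4 = 1 \<or> u mod 4 = 3"
  by presburger

lemma Od_mult:
  assumes "(m::nat) > 0" "n > 0"
  shows "Od (m * n) = Od m * Od n"
proof -
  obtain s1 o1 where m: "m = 2 ^ s1 * o1" "odd o1" using decomp2[OF assms(1)] by blast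
  obtain s2 o2 where n: "n = 2 ^ s2 * o2" "odd o2" using decomp2[OF assms(2)] by blast
  have mn: "m * n = 2 ^ (s1 + s2) * (o1 * o2)" unfolding m n by (simp add: power_add ac_simps)
  have oo: "odd (o1 * o2)" using m n by simp
  have "(o1 * o2) mod 4 = ((o1 mod 4) * (o2 mod 4)) mod 4" by (simp add: mod_mult_eq)
  moreover have "Od (m * n) = (if (o1 * o2) mod 4 = 1 then 1 else -1)" unfolding mn by (rule Od_eq[OF oo])
  moreover have "Od m = (if o1 mod 4 = 1 then 1 else -1)" unfolding m(1) by (rule Od_eq[OF m(2)])
  moreover have "Od n = (if o2 mod 4 = 1 then 1 else -1)" unfolding n(1) by (rule Od_eq[OF n(2)])
  ultimately show ?thesis
    using odd_mod4[OF m(2)] odd_mod4[OF n(2)] by auto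
qed

lemma pow_lt_imp: "(2::nat) ^ s * u < 2 ^ r \<Longrightarrow> u > 0 \<Longrightarrow> s < r"
proof (rule ccontr)
  assume a: "2 ^ s * u < 2 ^ r" "u > 0" "\<not> s < r"
  hence "(2::nat) ^ r \<le> 2 ^ s" by simp
  also have "\<dots> \<le> 2 ^ s * u" using a(2) by simp
  finally show False using a(1) by simp
qed

lemma Od_add:
  assumes "(a::nat) > 0" "a < 2 ^ r"
  shows "Od (a + 2 ^ (r + 1) * t) = Od a"
proof -
  obtain s u where a: "a = 2 ^ s * u" "odd u" using decomp2[OF assms(1)] by blast
  have "u > 0" using odd_pos[OF a(2)] .
  hence sr: "s < r" using pow_lt_imp assms a by blast
  have ee: "r + 1 = s + (2 + (r - 1 - s))" using sr by simp
  have "(2::nat) ^ (r + 1) = 2 ^ s * (4 * 2 ^ (r - 1 - s))"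
    by (subst ee) (simp add: power_add)
  hence e: "a + 2 ^ (r + 1) * t = 2 ^ s * (u + 4 * (2 ^ (r - 1 - s) * t))" unfolding a by (simp add: algebra_simps)
  have od: "odd (u + 4 * (2 ^ (r - 1 - s) * t))" using a(2) by simp
  have "(u + 4 * (2 ^ (r - 1 - s) * t)) mod 4 = u mod 4" by simp
  moreover have "Od (a + 2 ^ (r + 1) * t) = (if (u + 4 * (2 ^ (r - 1 - s) * t)) mod 4 = 1 then 1 else -1)"
    unfolding e by (rule Od_eq[OF od])
  moreover have "Od a = (if u mod 4 = 1 then 1 else -1)" unfolding a(1) by (rule Od_eq[OF a(2)])
  ultimately show ?thesis by simp
qed

lemma Od_sub:
  assumes "(a::nat) > 0" "a < 2 ^ r" "t \<ge> 1"
  shows "Od (2 ^ (r + 1) * t - a) = - Od a"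
proof -
  obtain s u where a: "a = 2 ^ s * u" "odd u" using decomp2[OF assms(1)] by blast
  have "u > 0" using odd_pos[OF a(2)] .
  hence sr: "s < r" using pow_lt_imp assms a by blast
  define k where "k = 2 ^ (r - 1 - s) * t"
  have ee: "r + 1 = s + (2 + (r - 1 - s))" using sr by simp
  have "(2::nat) ^ (r + 1) = 2 ^ s * (4 * 2 ^ (r - 1 - s))"
    by (subst ee) (simp add: power_add)
  hence e0: "(2::nat) ^ (r + 1) * t = 2 ^ s * (4 * k)" unfolding k_def by (simp add: algebra_simps)
  have "(2::nat) ^ r < 2 ^ (r + 1)" by simp
  also have "\<dots> \<le> 2 ^ (r + 1) * t" using assms(3) by simp
  finally have "a < 2 ^ (r + 1) * t" using assms(2) by linarith
  hence "2 ^ s * u < (2::nat) ^ s * (4 * k)" unfolding e0 a(1) .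
  hence lt: "u < 4 * k" by simp
  have e: "2 ^ (r + 1) * t - a = 2 ^ s * (4 * k - u)" unfolding e0 a(1) by (simp add: diff_mult_distrib2)
  define w where "w = u div 4"
  have uw: "u = 4 * w + u mod 4" unfolding w_def by simp
  have wk: "w < k" using lt uw by linarith
  define z where "z = 4 - u mod 4"
  have z13: "z = 1 \<or> z = 3" and zu: "z = 1 \<longleftrightarrow> u mod 4 = 3" unfolding z_def using odd_mod4[OF a(2)] by auto
  have kz: "4 * k - u = 4 * (k - w - 1) + z" using uw wk odd_mod4[OF a(2)] unfolding z_def by auto
  have m4: "(4 * k - u) mod 4 = z" unfolding kz using z13 by auto
  have od: "odd (4 * k - u)" unfolding kz using z13 by auto
  have "(4 * k - u) mod 4 = 1 \<longleftrightarrow> u mod 4 = 3" using m4 zu by auto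
  moreover have "Od (2 ^ (r + 1) * t - a) = (if (4 * k - u) mod 4 = 1 then 1 else -1)"
    unfolding e by (rule Od_eq[OF od])
  moreover have "Od a = (if u mod 4 = 1 then 1 else -1)" unfolding a(1) by (rule Od_eq[OF a(2)])
  ultimately show ?thesis using odd_mod4[OF a(2)] by auto
qed

lemma sub4:
  assumes "odd (u::nat)" "u < 4 * k"
  shows "odd (4 * k - u) \<and> ((4 * k - u) mod 4 = 1 \<longleftrightarrow> u mod 4 = 3)"
proof -
  define w where "w = u div 4"
  have uw: "u = 4 * w + u mod 4" unfolding w_def by simp
  have wk: "w < k" using assms uw by linarith
  define z where "z = 4 - u mod 4"
  have z13: "z = 1 \<or> z = 3" and zu: "z = 1 \<longleftrightarrow> u mod 4 = 3" unfolding z_def using odd_mod4[OF assms(1)] by auto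
  have kz: "4 * k - u = 4 * (k - w - 1) + z" using uw wk odd_mod4[OF assms(1)] unfolding z_def by auto
  have m4: "(4 * k - u) mod 4 = z" unfolding kz using z13 by auto
  have od: "odd (4 * k - u)" unfolding kz using z13 by auto
  show ?thesis using m4 zu od by auto
qed

lemma Od_pair:
  assumes "(j::nat) > 0" "j < 2 ^ r"
  shows "Od (2 ^ r + j) * Od (2 ^ r - j) = -1"
proof -
  obtain s u where a: "j = 2 ^ s * u" "odd u" using decomp2[OF assms(1)] by blast
  have "u > 0" using odd_pos[OF a(2)] .
  hence sr: "s < r" using pow_lt_imp assms a by blast
  define k where "k = r - s"
  have rk: "(2::nat) ^ r = 2 ^ s * 2 ^ k" unfolding k_def using sr by (simp add: power_add[symmetric])
  have uk: "u < 2 ^ k" using assms(2) unfolding rk a(1) by simp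
  show ?thesis
  proof (cases "k = 1")
    case True
    hence u1: "u = 1" using uk a(2) by (cases u) auto
    have "2 ^ r + j = 2 ^ s * 3" "2 ^ r - j = 2 ^ s * 1" unfolding rk a(1) True u1 by simp_all
    thus ?thesis using Od_eq[of 3 s] Od_eq[of 1 s] by simp
  next
    case False
    hence k2: "k \<ge> 2" using sr unfolding k_def by simp
    define m where "m = (2::nat) ^ (k - 2)"
    have kk: "k = 2 + (k - 2)" using k2 by simp
    have "(2::nat) ^ k = 2 ^ (2 + (k - 2))" using kk by (rule arg_cong)
    also have "\<dots> = 4 * 2 ^ (k - 2)" by (simp add: power_add)
    finally have km: "(2::nat) ^ k = 4 * m" unfolding m_def .
    have u4: "u < 4 * m" using uk km by simp
    have e1: "2 ^ r + j = 2 ^ s * (4 * m + u)" unfolding rk a(1) km by (simp add: algebra_simps)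
    have e2: "2 ^ r - j = 2 ^ s * (4 * m - u)" unfolding rk a(1) km by (simp add: diff_mult_distrib2)
    have o1: "odd (4 * m + u)" using a(2) by simp
    have s4: "odd (4 * m - u) \<and> ((4 * m - u) mod 4 = 1 \<longleftrightarrow> u mod 4 = 3)" by (rule sub4[OF a(2) u4])
    have "Od (2 ^ r + j) = (if (4 * m + u) mod 4 = 1 then 1 else -1)" unfolding e1 by (rule Od_eq[OF o1])
    moreover have "Od (2 ^ r - j) = (if (4 * m - u) mod 4 = 1 then 1 else -1)" unfolding e2 using s4 by (intro Od_eq) auto
    moreover have "(4 * m + u) mod 4 = u mod 4" by simp
    ultimately show ?thesis using s4 odd_mod4[OF a(2)] by auto
  qed
qed

lemma binom_step: "(n choose Suc k) * Suc k = (n choose k) * (n - k)"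
proof -
  have "Suc k * (n choose Suc k) = n * ((n - 1) choose k)" using times_binomial_minus1_eq[of "Suc k" n] by simp
  also have "\<dots> = (n - k) * (n choose k)" using binomial_absorb_comp[of n k] by simp
  finally show ?thesis by (simp add: mult.commute)
qed

lemma Od_1: "Od 1 = 1" using Od_odd[of 1] by simp
lemma Od_Suc0: "Od (Suc 0) = 1" using Od_1 by simp

lemma sign_cancel: "(x::int) * y = z * w \<Longrightarrow> y * y = 1 \<Longrightarrow> x = z * w * y"
  by (metis mult.assoc mult.right_neutral)

lemma B1:
  assumes "r \<ge> 1"
  shows "m < 2 ^ r \<Longrightarrow> Od ((2 * 2 ^ r - 1) choose m) = (-1) ^ m"
proof (induction m)
  case 0 thus ?case by (simp add: Od_1 Od_Suc0)
next
  case (Suc m)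
  let ?n = "2 * 2 ^ r - 1 :: nat"
  have mn: "Suc m \<le> ?n" using Suc.prems by simp
  have p1: "(?n choose Suc m) > 0" "(?n choose m) > 0" using mn by simp_all
  have nm: "?n - m > 0" using mn by simp
  have eq: "(?n choose Suc m) * Suc m = (?n choose m) * (?n - m)" by (rule binom_step)
  have "Od (?n choose Suc m) * Od (Suc m) = Od (?n choose m) * Od (?n - m)"
    using arg_cong[OF eq, of Od] Od_mult[OF p1(1), of "Suc m"] Od_mult[OF p1(2) nm] by simp
  moreover have e: "?n - m = 2 ^ (r + 1) * 1 - Suc m" by simp
  have "Od (?n - m) = - Od (Suc m)" unfolding e by (rule Od_sub) (use Suc.prems in auto)
  ultimately have "Od (?n choose Suc m) = Od (?n choose m) * (- Od (Suc m)) * Od (Suc m)"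
    using sign_cancel Od_sq by metis
  hence "Od (?n choose Suc m) = - Od (?n choose m)" using Od_sq[of "Suc m"] by (simp add: algebra_simps)
  thus ?case using Suc.IH Suc.prems by simp
qed

lemma B2aux:
  assumes "r \<ge> 1"
  shows "m < 2 ^ r \<Longrightarrow> Od ((2 * 2 ^ r + m) choose m) = 1"
proof (induction m)
  case 0 thus ?case by (simp add: Od_1 Od_Suc0)
next
  case (Suc m)
  let ?n = "2 * 2 ^ r + m :: nat"
  have eq: "Suc ?n * (?n choose m) = (Suc ?n choose Suc m) * Suc m" by (rule Suc_times_binomial_eq)
  have p1: "(Suc ?n choose Suc m) > 0" "(?n choose m) > 0" by simp_all
  have "Od (Suc ?n) * Od (?n choose m) = Od (Suc ?n choose Suc m) * Od (Suc m)"
    using arg_cong[OF eq, of Od] Od_mult[OF p1(1), of "Suc m"] Od_mult[of "Suc ?n" "?n choose m"] p1 by simp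
  moreover have e: "Suc ?n = Suc m + 2 ^ (r + 1) * 1" by simp
  have "Od (Suc ?n) = Od (Suc m)" unfolding e by (rule Od_add) (use Suc.prems in auto)
  ultimately have "Od (Suc m) * Od (?n choose m) = Od (Suc ?n choose Suc m) * Od (Suc m)" by simp
  hence "Od (Suc ?n choose Suc m) = Od (?n choose m)"
    using Od_sq[of "Suc m"] by (metis mult.commute mult.left_neutral mult.assoc)
  thus ?case using Suc.IH Suc.prems by simp
qed

lemma B2:
  assumes "r \<ge> 1"
  shows "Od ((3 * 2 ^ r) choose 2 ^ r) = -1"
proof -
  define N :: nat where "N = 2 ^ r"
  have N1: "N \<ge> 1" unfolding N_def by simp
  define m where "m = N - 1"
  have mN: "m < 2 ^ r" "Suc m = N" unfolding m_def N_def by simp_all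
  have a: "Od ((2 * N + m) choose m) = 1" using B2aux[OF assms mN(1)] unfolding N_def .
  have eq: "Suc (2 * N + m) * ((2 * N + m) choose m) = (Suc (2 * N + m) choose Suc m) * Suc m"
    by (rule Suc_times_binomial_eq)
  have sn: "Suc (2 * N + m) = 3 * N" using mN by simp
  have eq2: "(3 * N) * ((2 * N + m) choose m) = ((3 * N) choose N) * N" using eq unfolding sn mN(2) .
  have p: "((2 * N + m) choose m) > 0" "((3 * N) choose N) > 0" "3 * N > 0" "N > 0" using N1 by simp_all
  have o3: "Od (3 * N) = -1" unfolding N_def using Od_eq[of 3 r] by (simp add: mult.commute)
  have oN: "Od N = 1" unfolding N_def using Od_eq[of 1 r] by simp
  have "Od (3 * N) * Od ((2 * N + m) choose m) = Od ((3 * N) choose N) * Od N"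
    using arg_cong[OF eq2, of Od] Od_mult[OF p(3) p(1)] Od_mult[OF p(2) p(4)] by simp
  thus ?thesis using a o3 oN unfolding N_def by simp
qed

lemma B3:
  assumes "r \<ge> 1"
  shows "m < 2 ^ r \<Longrightarrow> Od ((3 * 2 ^ r - 1) choose m) = Od ((2 ^ r - 1) choose m)"
proof (induction m)
  case 0 thus ?case by simp
next
  case (Suc m)
  let ?n = "3 * 2 ^ r - 1 :: nat"
  let ?k = "2 ^ r - 1 :: nat"
  have mk: "Suc m \<le> ?k" using Suc.prems by simp
  have mn: "Suc m \<le> ?n" using mk by simp
  have p1: "(?n choose Suc m) > 0" "(?n choose m) > 0" "(?k choose Suc m) > 0" "(?k choose m) > 0"
    using mn mk by simp_all
  have nm: "?n - m > 0" "?k - m > 0" using mn mk by simp_all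
  have "Od (?n choose Suc m) * Od (Suc m) = Od (?n choose m) * Od (?n - m)"
    using arg_cong[OF binom_step[of ?n m], of Od] Od_mult[OF p1(1), of "Suc m"] Od_mult[OF p1(2) nm(1)] by simp
  moreover have "Od (?k choose Suc m) * Od (Suc m) = Od (?k choose m) * Od (?k - m)"
    using arg_cong[OF binom_step[of ?k m], of Od] Od_mult[OF p1(3), of "Suc m"] Od_mult[OF p1(4) nm(2)] by simp
  moreover have e: "?n - m = (?k - m) + 2 ^ (r + 1) * 1" using mk by simp
  have "Od (?n - m) = Od (?k - m)" unfolding e by (rule Od_add) (use nm in auto)
  ultimately have "Od (?n choose Suc m) * Od (Suc m) = Od (?k choose Suc m) * Od (Suc m)"
    using Suc.IH Suc.prems by simp
  thus ?case using Od_sq[of "Suc m"] by (metis mult.assoc mult.right_neutral)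
qed



lemma cells_Nil: "cells [] = {}" by (simp add: cells_def)

lemma cells_Cons: "cells (a # l) = (\<lambda>j. (0, j)) ` {..<a} \<union> (\<lambda>(i, j). (Suc i, j)) ` cells l"
proof (rule set_eqI)
  fix x :: "nat \<times> nat"
  obtain i j where x: "x = (i, j)" by (cases x)
  show "x \<in> cells (a # l) \<longleftrightarrow> x \<in> (\<lambda>j. (0, j)) ` {..<a} \<union> (\<lambda>(i, j). (Suc i, j)) ` cells l"
  proof (cases i)
    case 0 thus ?thesis unfolding x cells_def by auto
  next
    case (Suc i')
    have "(Suc i', j) \<in> (\<lambda>(i, j). (Suc i, j)) ` cells l \<longleftrightarrow> (i', j) \<in> cells l" by force
    thus ?thesis unfolding x Suc cells_def by auto
  qed
qed

lemma cells_fin: "finite (cells l)"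
  by (induction l) (simp_all add: cells_Nil cells_Cons)

lemma card_cells: "card (cells l) = sum_list l"
proof (induction l)
  case Nil thus ?case by (simp add: cells_Nil)
next
  case (Cons a l)
  have inj1: "inj_on (\<lambda>j. (0::nat, j)) {..<a}" by (auto simp: inj_on_def)
  have inj2: "inj_on (\<lambda>(i, j). (Suc i, j)) (cells l)" by (auto simp: inj_on_def)
  have disj: "(\<lambda>j. (0::nat, j)) ` {..<a} \<inter> (\<lambda>(i, j). (Suc i, j)) ` cells l = {}" by auto
  have "card (cells (a # l)) = card ((\<lambda>j. (0::nat, j)) ` {..<a}) + card ((\<lambda>(i, j). (Suc i, j)) ` cells l)"
    unfolding cells_Cons by (rule card_Un_disjoint) (use disj cells_fin in auto)
  also have "\<dots> = a + sum_list l" using card_image[OF inj1] card_image[OF inj2] Cons.IH by simp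
  finally show ?case by simp
qed

lemma f_syt_eq: "f_syt lam = card (syt (cells lam))"
  unfolding f_syt_def SYT_def syt_def card_cells ..

lemma cells_hook: "cells (p # replicate e 1) = HK p e"
proof (rule set_eqI)
  fix x :: "nat \<times> nat"
  obtain i j where x: "x = (i, j)" by (cases x)
  show "x \<in> cells (p # replicate e 1) \<longleftrightarrow> x \<in> HK p e"
    unfolding x cells_def HK_def by (cases i) auto
qed

lemma nth_rep21: "k < c + d \<Longrightarrow> (replicate c (2::nat) @ replicate d 1) ! k = (if k < c then 2 else 1)"
  by (simp add: nth_append)

lemma cells_fat: "cells (p # q # (replicate c 2 @ replicate d 1)) = FH p q c d"
proof (rule set_eqI)
  fix x :: "nat \<times> nat"
  obtain i j where x: "x = (i, j)" by (cases x)
  show "x \<in> cells (p # q # (replicate c 2 @ replicate d 1)) \<longleftrightarrow> x \<in> FH p q c d"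
  proof (cases "i \<ge> 2")
    case True
    then obtain k where k: "i = Suc (Suc k)" by (metis add_2_eq_Suc le_Suc_ex)
    have "x \<in> cells (p # q # (replicate c 2 @ replicate d 1)) \<longleftrightarrow> k < c + d \<and> j < (replicate c (2::nat) @ replicate d 1) ! k"
      unfolding x k cells_def by simp
    also have "\<dots> \<longleftrightarrow> k < c + d \<and> j < (if k < c then 2 else 1)" using nth_rep21[of k c d] by auto
    also have "\<dots> \<longleftrightarrow> x \<in> FH p q c d" unfolding x k FH_def by auto
    finally show ?thesis .
  next
    case False
    hence "i = 0 \<or> i = 1" by auto
    thus ?thesis unfolding x cells_def FH_def by auto
  qed
qed

lemma H_Nil: "H [] = {}" by (simp add: H_def)

lemma H_Cons: "H (a # l) = insert (a + length l) (H l)"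
proof (rule set_eqI)
  fix x
  show "x \<in> H (a # l) \<longleftrightarrow> x \<in> insert (a + length l) (H l)"
  proof
    assume "x \<in> H (a # l)"
    then obtain i where i: "i < Suc (length l)" "x = (a # l) ! i + Suc (length l) - 1 - i" by (auto simp: H_def)
    show "x \<in> insert (a + length l) (H l)"
    proof (cases i)
      case 0 thus ?thesis using i by simp
    next
      case (Suc i')
      hence "x = l ! i' + length l - 1 - i'" "i' < length l" using i by auto
      thus ?thesis by (auto simp: H_def)
    qed
  next
    assume "x \<in> insert (a + length l) (H l)"
    thus "x \<in> H (a # l)"
    proof
      assume "x = a + length l"
      hence "x = (a # l) ! 0 + length (a # l) - 1 - 0" by simp
      thus ?thesis unfolding H_def by blast
    next
      assume "x \<in> H l"
      then obtain i where i: "i < length l" "x = l ! i + length l - 1 - i" by (auto simp: H_def)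
      hence "x = (a # l) ! Suc i + length (a # l) - 1 - Suc i" "Suc i < length (a # l)" by auto
      thus ?thesis unfolding H_def by blast
    qed
  qed
qed

lemma H_rep1: "H (replicate d (1::nat)) = {1..d}"
  by (induction d) (auto simp: H_Nil H_Cons)

lemma H_rep2: "H (replicate c (2::nat) @ ys) = {length ys + 2 .. length ys + c + 1} \<union> H ys"
  by (induction c) (auto simp: H_Cons)



lemma part_tl: "is_partition (a # l) \<Longrightarrow> is_partition l"
  unfolding is_partition_def by simp

lemma H_bound: "is_partition (a # l) \<Longrightarrow> x \<in> H l \<Longrightarrow> x < a + length l"
proof (induction l arbitrary: a x)
  case Nil thus ?case by (simp add: H_Nil)
next
  case (Cons b l)
  have ba: "b \<le> a" using Cons.prems(1) unfolding is_partition_def by simp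
  have pb: "is_partition (b # l)" using part_tl[OF Cons.prems(1)] .
  from Cons.prems(2) have "x = b + length l \<or> x \<in> H l" by (simp add: H_Cons)
  thus ?case
  proof
    assume "x = b + length l" thus ?thesis using ba by simp
  next
    assume "x \<in> H l" hence "x < b + length l" using Cons.IH[OF pb] by blast
    thus ?thesis using ba by simp
  qed
qed

lemma H_inj: "is_partition l \<Longrightarrow> is_partition m \<Longrightarrow> H l = H m \<Longrightarrow> l = m"
proof (induction l arbitrary: m)
  case Nil
  thus ?case by (cases m) (auto simp: H_Nil H_Cons)
next
  case (Cons a l)
  obtain b m' where m: "m = b # m'" using Cons.prems(3) by (cases m) (auto simp: H_Nil H_Cons)
  have pl: "is_partition l" and pm: "is_partition m'" using part_tl Cons.prems(1,2) m by blast+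
  have e: "insert (a + length l) (H l) = insert (b + length m') (H m')"
    using Cons.prems(3) unfolding m H_Cons .
  have nl: "a + length l \<notin> H l" using H_bound[OF Cons.prems(1)] by blast
  have nm: "b + length m' \<notin> H m'" using H_bound[of b m'] Cons.prems(2) m by blast
  have le1: "b + length m' \<le> a + length l"
  proof -
    have "b + length m' \<in> insert (a + length l) (H l)" using e by simp
    thus ?thesis using H_bound[OF Cons.prems(1)] by fastforce
  qed
  have le2: "a + length l \<le> b + length m'"
  proof -
    have "a + length l \<in> insert (b + length m') (H m')" using e[symmetric] by simp
    thus ?thesis using H_bound[of b m'] Cons.prems(2) m by fastforce
  qed
  have eqx: "a + length l = b + length m'" using le1 le2 by simp
  have "H l = H m'"
  proof -
    have "H l = insert (a + length l) (H l) - {a + length l}" using nl by simp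
    also have "\<dots> = insert (b + length m') (H m') - {b + length m'}" using e eqx by simp
    also have "\<dots> = H m'" using nm by simp
    finally show ?thesis .
  qed
  hence lm: "l = m'" using Cons.IH[OF pl pm] by simp
  hence "a = b" using eqx by simp
  thus ?case using lm m by simp
qed

lemma sw_rep: "R x x \<Longrightarrow> sorted_wrt R (replicate n x)"
  by (induction n) auto

lemma part_hook: "p \<ge> 1 \<Longrightarrow> is_partition (p # replicate e (1::nat))"
  unfolding is_partition_def by (auto intro: sw_rep)

lemma part_fat: "q \<ge> 2 \<Longrightarrow> p \<ge> q \<Longrightarrow> is_partition (p # q # (replicate c (2::nat) @ replicate d 1))"
  unfolding is_partition_def by (auto simp: sorted_wrt_append intro: sw_rep)



lemma frac_eq2:
  fixes n1 d1 n2 d2 :: real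
  assumes "d1 \<noteq> 0" "d2 \<noteq> 0" "n1 * d2 = n2 * d1"
  shows "n1 / d1 = n2 / d2"
  using assms by (simp add: frac_eq_eq)

lemma fat_identity:
  fixes N b j :: nat
  assumes N: "N \<ge> 1" and jb: "1 \<le> j" "j \<le> b" and bN: "b < N"
  defines "p \<equiv> j + 2 * N - b" and "q \<equiv> N - b + 1" and "c \<equiv> b - j" and "d \<equiv> j - 1"
  shows "G p q c d * (real (2 * N + j) * real (N - j)) =
    real ((N - 1) choose b) * real ((2 * N - 1) choose (b - j)) * real ((3 * N) choose N) * real (N + j) * real j"
proof -
  have a1: "p + q + 2 * c + d = 3 * N" "p - q + 1 = N + j" "d + 1 = j" "p + c + d + 1 = 2 * N + j"
    "p + c = 2 * N" "p - 1 = 2 * N - b + j - 1" "q + c + d = N" "q + c - 1 = N - j" "q - 2 = N - b - 1"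
    "c + d + 1 = b" "2 * N + d + 1 = 2 * N + j"
    using assms by auto
  define X3 where "X3 = (fact (3 * N) :: real)"
  define Yp where "Yp = (fact (2 * N - b + j - 1) :: real)"
  define Zq where "Zq = (fact (N - b - 1) :: real)"
  define Wc where "Wc = (fact c :: real)"
  define Bf where "Bf = (fact b :: real)"
  define F1 where "F1 = (fact (N - 1) :: real)"
  define F2 where "F2 = (fact (2 * N - 1) :: real)"
  define NN where "NN = real N"
  define J where "J = real j"
  have pos: "X3 > 0" "Yp > 0" "Zq > 0" "Wc > 0" "Bf > 0" "F1 > 0" "F2 > 0"
    by (simp_all add: X3_def Yp_def Zq_def Wc_def Bf_def F1_def F2_def)
  have hy: "J > 0" "NN > J" using assms by (simp_all add: NN_def J_def)
  have cs: "real (N + j) = NN + J" "real (2 * N + j) = 2 * NN + J" "real (2 * N) = 2 * NN" "real (N - j) = NN - J"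
    "real j = J" "real N = NN"
    using assms by (simp_all add: NN_def J_def of_nat_diff)
  have eG: "G p q c d = X3 * (NN + J) * J / ((2 * NN + J) * (2 * NN) * Yp * NN * (NN - J) * Zq * Wc * Bf)"
    unfolding G_def a1 X3_def Yp_def Zq_def Wc_def Bf_def cs ..
  have fN: "fact N = NN * F1" unfolding F1_def NN_def using fact_reduce[of N] N by simp
  have f2N: "fact (2 * N) = 2 * NN * F2" unfolding F2_def NN_def using fact_reduce[of "2 * N"] N by simp
  have b1: "real ((N - 1) choose b) = F1 / (Bf * Zq)"
    unfolding F1_def Bf_def Zq_def using binomial_fact[of b "N - 1", where 'a = real] bN
    by (simp add: diff_diff_add add.commute)
  have b2: "real ((2 * N - 1) choose (b - j)) = F2 / (Wc * Yp)"
  proof -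
    have "2 * N - 1 - (b - j) = 2 * N - b + j - 1" using assms by simp
    thus ?thesis unfolding F2_def Wc_def Yp_def c_def using binomial_fact[of "b - j" "2 * N - 1", where 'a = real] assms
      by simp
  qed
  have b3: "real ((3 * N) choose N) = X3 / ((NN * F1) * (2 * NN * F2))"
  proof -
    have "3 * N - N = 2 * N" by simp
    thus ?thesis unfolding X3_def fN[symmetric] f2N[symmetric] using binomial_fact[of N "3 * N", where 'a = real]
      by simp
  qed
  show ?thesis unfolding eG b1 b2 b3 cs
  proof -
    have l: "X3 * (NN + J) * J / ((2 * NN + J) * (2 * NN) * Yp * NN * (NN - J) * Zq * Wc * Bf) * ((2 * NN + J) * (NN - J))
      = (X3 * (NN + J) * J * ((2 * NN + J) * (NN - J))) / ((2 * NN + J) * (2 * NN) * Yp * NN * (NN - J) * Zq * Wc * Bf)"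
      by simp
    have r: "F1 / (Bf * Zq) * (F2 / (Wc * Yp)) * (X3 / (NN * F1 * (2 * NN * F2))) * (NN + J) * J
      = (F1 * F2 * X3 * (NN + J) * J) / (Bf * Zq * (Wc * Yp) * (NN * F1 * (2 * NN * F2)))"
      by simp
    have "(X3 * (NN + J) * J * ((2 * NN + J) * (NN - J))) / ((2 * NN + J) * (2 * NN) * Yp * NN * (NN - J) * Zq * Wc * Bf)
       = (F1 * F2 * X3 * (NN + J) * J) / (Bf * Zq * (Wc * Yp) * (NN * F1 * (2 * NN * F2)))"
    proof (rule frac_eq2)
      show "(2 * NN + J) * (2 * NN) * Yp * NN * (NN - J) * Zq * Wc * Bf \<noteq> 0" using pos hy by simp
      show "Bf * Zq * (Wc * Yp) * (NN * F1 * (2 * NN * F2)) \<noteq> 0" using pos hy by simp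
    qed algebra
    thus "X3 * (NN + J) * J / ((2 * NN + J) * (2 * NN) * Yp * NN * (NN - J) * Zq * Wc * Bf) * ((2 * NN + J) * (NN - J)) =
      F1 / (Bf * Zq) * (F2 / (Wc * Yp)) * (X3 / (NN * F1 * (2 * NN * F2))) * (NN + J) * J"
      unfolding l r .
  qed
qed



lemma Od_mult3: "(a::nat) > 0 \<Longrightarrow> b > 0 \<Longrightarrow> c > 0 \<Longrightarrow> Od (a * b * c) = Od a * Od b * Od c"
  using Od_mult[of "a * b" c] Od_mult[of a b] by simp

lemma Od_mult5: "(a::nat) > 0 \<Longrightarrow> b > 0 \<Longrightarrow> c > 0 \<Longrightarrow> e > 0 \<Longrightarrow> g > 0 \<Longrightarrow>
    Od (a * b * c * e * g) = Od a * Od b * Od c * Od e * Od g"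
  using Od_mult[of "a * b * c * e" g] Od_mult[of "a * b * c" e] Od_mult3[of a b c] by simp

lemma alg_sign: "(A::int) * a * u = M * s * (-1) * v * a \<Longrightarrow> a * a = 1 \<Longrightarrow> u * u = 1 \<Longrightarrow> v * u = -1 \<Longrightarrow> A = M * s"
  by algebra

lemma Od_fat:
  fixes r b j :: nat
  assumes r: "r \<ge> 1" and jb: "1 \<le> j" "j \<le> b" and bN: "b < 2 ^ r"
  shows "Od (card (syt (FH (j + 2 * 2 ^ r - b) (2 ^ r - b + 1) (b - j) (j - 1))))
     = (-1) ^ (b - j) * Od ((2 ^ r - 1) choose b)"
proof -
  define N :: nat where "N = 2 ^ r"
  have N1: "N \<ge> 1" unfolding N_def by simp
  have bN': "b < N" using bN unfolding N_def .
  define F where "F = card (syt (FH (j + 2 * N - b) (N - b + 1) (b - j) (j - 1)))"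
  have "real F = G (j + 2 * N - b) (N - b + 1) (b - j) (j - 1)"
    unfolding F_def by (rule FH_count) (use bN' jb in auto)
  hence "real F * (real (2 * N + j) * real (N - j)) =
    real ((N - 1) choose b) * real ((2 * N - 1) choose (b - j)) * real ((3 * N) choose N) * real (N + j) * real j"
    using fat_identity[OF N1 jb bN'] by simp
  hence "real (F * (2 * N + j) * (N - j)) =
    real (((N - 1) choose b) * ((2 * N - 1) choose (b - j)) * ((3 * N) choose N) * (N + j) * j)"
    by (simp add: mult.assoc)
  hence eq: "F * (2 * N + j) * (N - j) = ((N - 1) choose b) * ((2 * N - 1) choose (b - j)) * ((3 * N) choose N) * (N + j) * j"
    by (simp only: of_nat_eq_iff)
  have pos: "((N - 1) choose b) > 0" "((2 * N - 1) choose (b - j)) > 0" "((3 * N) choose N) > 0" "N + j > 0" "j > 0"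
    "2 * N + j > 0" "N - j > 0"
    using bN' jb by auto
  have "F * (2 * N + j) * (N - j) > 0" unfolding eq using pos by simp
  hence Fp: "F > 0" by simp
  have "Od F * Od (2 * N + j) * Od (N - j) =
     Od ((N - 1) choose b) * Od ((2 * N - 1) choose (b - j)) * Od ((3 * N) choose N) * Od (N + j) * Od j"
    using arg_cong[OF eq, of Od] Od_mult3[OF Fp pos(6) pos(7)] Od_mult5[OF pos(1-5)] by simp
  moreover have "Od (2 * N + j) = Od j"
  proof -
    have e: "2 * N + j = j + 2 ^ (r + 1) * 1" unfolding N_def by simp
    show ?thesis unfolding e by (rule Od_add) (use jb bN' N_def in auto)
  qed
  moreover have "Od (N + j) * Od (N - j) = -1" unfolding N_def by (rule Od_pair) (use jb bN' N_def in auto)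
  moreover have "Od ((2 * N - 1) choose (b - j)) = (-1) ^ (b - j)" unfolding N_def
    by (rule B1[OF r]) (use jb bN' N_def in auto)
  moreover have "Od ((3 * N) choose N) = -1" unfolding N_def by (rule B2[OF r])
  ultimately have "Od F * Od j * Od (N - j) = Od ((N - 1) choose b) * (-1) ^ (b - j) * (-1) * Od (N + j) * Od j"
    by simp
  hence "Od F = Od ((N - 1) choose b) * (-1) ^ (b - j)"
    by (rule alg_sign) (use Od_sq[of j] Od_sq[of "N - j"] \<open>Od (N + j) * Od (N - j) = -1\<close> in auto)
  thus ?thesis unfolding F_def N_def by (simp add: mult.commute)
qed



lemma altsum: "(\<Sum>x\<in>{1..b}. (-1::int) ^ (b - x)) = (if even b then 0 else 1)"
proof (induction b)
  case 0 thus ?case by simp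
next
  case (Suc b)
  have "(\<Sum>x\<in>{1..Suc b}. (-1::int) ^ (Suc b - x)) = (-1) ^ (Suc b - Suc b) + (\<Sum>x\<in>{1..b}. (-1::int) ^ (Suc b - x))"
    by (simp add: add.commute)
  also have "(\<Sum>x\<in>{1..b}. (-1::int) ^ (Suc b - x)) = (\<Sum>x\<in>{1..b}. - ((-1::int) ^ (b - x)))"
    by (rule sum.cong) (auto simp: Suc_diff_le)
  also have "\<dots> = - (\<Sum>x\<in>{1..b}. (-1::int) ^ (b - x))" by (simp add: sum_negf)
  finally show ?case using Suc.IH by simp
qed

lemma H_fat_list:
  assumes "1 \<le> x" "x \<le> b" "b < N"
  shows "H ((x + 2 * N - b) # (N - b + 1) # (replicate (b - x) 2 @ replicate (x - 1) 1)) = insert (x + 2 * N) (insert N ({1..b} - {x}))"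
proof -
  have l: "length (replicate (b - x) (2::nat) @ replicate (x - 1) 1) = b - 1" using assms by simp
  have e1: "x + 2 * N - b + Suc (b - 1) = x + 2 * N" using assms by simp
  have e2: "N - b + 1 + (b - 1) = N" using assms by simp
  have e3: "{x - 1 + 2..x - 1 + (b - x) + 1} \<union> {1..x - 1} = {1..b} - {x}" using assms by auto
  show ?thesis unfolding H_Cons H_rep2 H_rep1 length_Cons l length_replicate e1 e2 e3 ..
qed

theorem lemma5p2:
  fixes R b :: nat and mu :: "nat list"
  assumes "R \<ge> 2"
    and "is_partition mu"
    and "sum_list mu = 2 ^ (R - 1)"
    and "b \<le> 2 ^ (R - 1) - 1"
    and "H mu = insert (2 ^ (R - 1)) {1..b}"
  shows "S (P1 R mu) mu = (if even b then 1 else 2)"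
proof -
  define r where "r = R - 1"
  define N :: nat where "N = 2 ^ r"
  have r1: "r \<ge> 1" using assms(1) unfolding r_def by simp
  have N2: "N \<ge> 2" unfolding N_def using r1
    by (metis one_le_numeral power_increasing power_one_right)
  have RN: "(2::nat) ^ R = 2 * N" unfolding N_def r_def using assms(1)
    by (metis Suc_diff_le Suc_1 diff_Suc_1 le_trans one_le_numeral power_Suc)
  have bN: "b < N" using assms(4) N2 unfolding N_def r_def by simp
  have Hmu: "H mu = insert N {1..b}" using assms(5) unfolding N_def r_def .
  define mu0 where "mu0 = (N - b) # replicate b (1::nat)"
  have "H mu0 = insert N {1..b}" unfolding mu0_def H_Cons H_rep1 using bN by simp
  hence mu: "mu = mu0" using H_inj[OF assms(2) part_hook[of "N - b" b]] Hmu bN unfolding mu0_def by simp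
  define M where "M = Od ((N - 1) choose b)"
  have fmu: "f_syt mu = (N - 1) choose b"
    unfolding mu mu0_def f_syt_eq cells_hook using HK_count[of "N - b" b] bN by simp
  define L where "L x = (if x = N then (3 * N - b) # replicate b (1::nat)
     else (x + 2 * N - b) # (N - b + 1) # (replicate (b - x) 2 @ replicate (x - 1) 1))" for x
  have Lprop: "is_partition (L x) \<and> H (L x) = (H mu \<union> {x + 2 ^ R}) - {x}" if x: "x \<in> H mu" for x
  proof (cases "x = N")
    case True
    have "is_partition (L x)" unfolding L_def using True bN part_hook[of "3 * N - b" b] by simp
    moreover have "H (L x) = insert (3 * N) {1..b}"
    proof -
      have Lx: "L x = (3 * N - b) # replicate b 1" unfolding L_def using True by simp
      show ?thesis unfolding Lx H_Cons H_rep1 length_replicate using bN by simp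
    qed
    moreover have "(H mu \<union> {x + 2 ^ R}) - {x} = insert (3 * N) {1..b}" unfolding Hmu RN True using bN by auto
    ultimately show ?thesis by simp
  next
    case False
    hence x1: "1 \<le> x" "x \<le> b" using x Hmu by auto
    have "is_partition (L x)" unfolding L_def using False bN x1 part_fat[of "N - b + 1" "x + 2 * N - b" "b - x" "x - 1"] by simp
    moreover have "H (L x) = insert (x + 2 * N) (insert N ({1..b} - {x}))"
    proof -
      have Lx: "L x = (x + 2 * N - b) # (N - b + 1) # (replicate (b - x) 2 @ replicate (x - 1) 1)"
        unfolding L_def using False by simp
      show ?thesis unfolding Lx by (rule H_fat_list[OF x1 bN])
    qed
    moreover have "(H mu \<union> {x + 2 ^ R}) - {x} = insert (x + 2 * N) (insert N ({1..b} - {x}))" unfolding Hmu RN using False x1 bN by auto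
    ultimately show ?thesis by simp
  qed
  have P1eq: "P1 R mu = L ` H mu"
  proof
    show "P1 R mu \<subseteq> L ` H mu"
    proof
      fix lam assume "lam \<in> P1 R mu"
      then obtain x where lp: "is_partition lam" and x: "x \<in> H mu" and hx: "H lam = (H mu \<union> {x + 2 ^ R}) - {x}"
        unfolding P1_def by blast
      have "lam = L x" using H_inj[OF lp] Lprop[OF x] hx by simp
      thus "lam \<in> L ` H mu" using x by blast
    qed
  next
    show "L ` H mu \<subseteq> P1 R mu" unfolding P1_def using Lprop by blast
  qed
  have injL: "inj_on L (H mu)"
  proof (rule inj_onI)
    fix x y assume x: "x \<in> H mu" and y: "y \<in> H mu" and e: "L x = L y"
    have "x + 2 ^ R \<in> H (L x)" using Lprop[OF x] x by auto
    hence "x + 2 ^ R \<in> (H mu \<union> {y + 2 ^ R}) - {y}" using e Lprop[OF y] by simp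
    moreover have "x + 2 ^ R \<notin> H mu" using Hmu RN bN by auto
    ultimately show "x = y" by simp
  qed
  have fN: "Od (f_syt (L N)) = M"
  proof -
    have LN: "L N = (3 * N - b) # replicate b 1" by (simp add: L_def)
    have "f_syt (L N) = (3 * N - 1) choose b"
      unfolding LN f_syt_eq cells_hook using HK_count[of "3 * N - b" b] bN by simp
    thus ?thesis unfolding M_def N_def using B3[OF r1, of b] bN N_def by simp
  qed
  have fx: "Od (f_syt (L x)) = (-1) ^ (b - x) * M" if x: "x \<in> {1..b}" for x
  proof -
    have xN: "x \<noteq> N" using x bN by auto
    have Lx: "L x = (x + 2 * N - b) # (N - b + 1) # (replicate (b - x) 2 @ replicate (x - 1) 1)"
      unfolding L_def using xN by simp
    have "f_syt (L x) = card (syt (FH (x + 2 * 2 ^ r - b) (2 ^ r - b + 1) (b - x) (x - 1)))"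
      unfolding Lx f_syt_eq cells_fat N_def ..
    thus ?thesis unfolding M_def N_def using Od_fat[OF r1, of x b] x bN N_def by simp
  qed
  have sum: "(\<Sum>lam\<in>P1 R mu. Od (f_syt lam)) = M * (1 + (\<Sum>x\<in>{1..b}. (-1::int) ^ (b - x)))"
  proof -
    have "(\<Sum>lam\<in>P1 R mu. Od (f_syt lam)) = (\<Sum>x\<in>H mu. Od (f_syt (L x)))"
      unfolding P1eq by (rule sum.reindex_cong[OF injL refl]) simp
    also have "\<dots> = Od (f_syt (L N)) + (\<Sum>x\<in>{1..b}. Od (f_syt (L x)))"
      unfolding Hmu using bN by (subst sum.insert) auto
    also have "\<dots> = M + (\<Sum>x\<in>{1..b}. (-1) ^ (b - x) * M)" using fN fx by simp
    also have "\<dots> = M * (1 + (\<Sum>x\<in>{1..b}. (-1::int) ^ (b - x)))"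
      by (simp add: algebra_simps sum_distrib_left)
    finally show ?thesis .
  qed
  have Mpm: "M = 1 \<or> M = -1" unfolding M_def using Od_pm .
  have "S (P1 R mu) mu = real_of_int (M * (1 + (if even b then 0 else 1))) / real_of_int M"
    unfolding S_def fmu M_def[symmetric] of_int_sum[symmetric] sum altsum ..
  thus ?thesis using Mpm by auto
qed

end
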